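(* A PPT three-mode CM $\gamma$ is fully separable if and only if there exists a one-mode CM $\gamma_A$ such that $$\tilde N\ge\gamma_A\quad\text{and}\quad N\ge\gamma_A .$$ Moreover, $\gamma_A$ can be required without loss of generality to be pure, i.e. $\det\gamma_A=1$.
   Context: Conventions: Three modes $A,B,C$, phase-space vectors ordered mode-wise as $(q_A,p_A,q_B,p_B,q_C,p_C)$. $J_1=\begin{pmatrix}0&-1\\1&0\end{pmatrix}$, $J=J_1\oplus J_1\oplus J_1$. A CM of $n$ modes is a real symmetric $2n\times2n$ matrix $\gamma>0$ with $\gamma-iJ\ge0$ (for one mode: $\gamma-iJ_1\ge0$); it is pure if $\det\gamma=1$. $X\ge Y$ means $X-Y$ is positive semidefinite (Hermitian matrices). For $x\in\{A,B,C\}$, $\tilde J_x$ is $J$ with the $2\times2$ diagonal block of mode $x$ replaced by $-J_1$, and $\tilde J_0=J$. A three-mode CM $\gamma$ is called PPT if $\gamma\ge i\tilde J_x$ for all $x\in\{0,A,B,C\}$, and fully separable if there exist one-mode CMs $\gamma_A,\gamma_B,\gamma_C$ with $\gamma\ge\gamma_A\oplus\gamma_B\oplus\gamma_C$. Write $\gamma=\begin{pmatrix}A&C\\C^T&B\end{pmatrix}$ with $A$ the $2\times2$ block of mode $A$, $B$ the $4\times4$ block of modes $B,C$, $C$ the $2\times4$ off-diagonal block; let $J_{BC}=J_1\oplus J_1$, $\tilde J_{BC}=J_1\oplus(-J_1)$, and define the (Hermitian, possibly complex) $2\times2$ matrices $$N=A-C(B-iJ_{BC})^{-1}C^T,\qquad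 \tilde N=A-C(B-i\tilde J_{BC})^{-1}C^T,$$ where the inverses are Moore–Penrose pseudoinverses (inversion on the range); these are well defined because $\ker(B-iJ_{BC}),\ker(B-i\tilde J_{BC})\subseteq\ker C$ for PPT $\gamma$. *)

theory Defs
  imports "Jordan_Normal_Form.Schur_Decomposition"
begin

definition cmat :: "real mat \<Rightarrow> complex mat" where
  "cmat M = map_mat complex_of_real M"

definition psd :: "complex mat \<Rightarrow> bool" where
  "psd M \<longleftrightarrow> M \<in> carrier_mat (dim_row M) (dim_row M) \<and> mat_adjoint M = M \<and>
     (\<forall>v \<in> carrier_vec (dim_row M). 0 \<le> Re ((M *\<^sub>v v) \<bullet>c v))"

definition loewner_ge :: "complex mat \<Rightarrow> complex mat \<Rightarrow> bool" where
  "loewner_ge X Y \<longleftrightarrow> dim_row X = dim_row Y \<and> dim_col X = dim_col Y \<and> psd (X - Y)"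

definition real_pd :: "real mat \<Rightarrow> bool" where
  "real_pd M \<longleftrightarrow> M \<in> carrier_mat (dim_row M) (dim_row M) \<and>
     (\<forall>x \<in> carrier_vec (dim_row M). x \<noteq> 0\<^sub>v (dim_row M) \<longrightarrow> 0 < x \<bullet> (M *\<^sub>v x))"

text \<open>Mode-wise block-diagonal symplectic-type matrix on n modes: the 2x2 diagonal
  block of mode k is J1 = [[0,-1],[1,0]] if k is not in S and -J1 if k is in S.
  So Jmodes n {} = J1 \<oplus> ... \<oplus> J1, and flipping mode k gives the partially
  transposed form.\<close>
definition Jmodes :: "nat \<Rightarrow> nat set \<Rightarrow> complex mat" where
  "Jmodes n S = mat (2*n) (2*n) (\<lambda>(i,j).
     (if i div 2 = j div 2 then
        (if i mod 2 = 0 \<and> j mod 2 = 1 then -1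
         else if i mod 2 = 1 \<and> j mod 2 = 0 then 1 else 0)
      else 0) * (if i div 2 \<in> S then -1 else 1))"

definition is_CM :: "nat \<Rightarrow> real mat \<Rightarrow> bool" where
  "is_CM n \<gamma> \<longleftrightarrow> \<gamma> \<in> carrier_mat (2*n) (2*n) \<and> transpose_mat \<gamma> = \<gamma> \<and> real_pd \<gamma> \<and>
     loewner_ge (cmat \<gamma>) (\<i> \<cdot>\<^sub>m Jmodes n {})"

definition dsum :: "'a::zero mat \<Rightarrow> 'a mat \<Rightarrow> 'a mat" where
  "dsum X Y = four_block_mat X (0\<^sub>m (dim_row X) (dim_col Y)) (0\<^sub>m (dim_row Y) (dim_col X)) Y"

text \<open>PPT three-mode CM: gamma \<ge> i J~_x for x in {0,A,B,C} (modes A,B,C = 0,1,2).\<close>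
definition PPT :: "real mat \<Rightarrow> bool" where
  "PPT \<gamma> \<longleftrightarrow> (\<forall>S \<in> {{}, {0}, {1}, {2::nat}}. loewner_ge (cmat \<gamma>) (\<i> \<cdot>\<^sub>m Jmodes 3 S))"

definition fully_separable :: "real mat \<Rightarrow> bool" where
  "fully_separable \<gamma> \<longleftrightarrow> (\<exists>\<gamma>A \<gamma>B \<gamma>C. is_CM 1 \<gamma>A \<and> is_CM 1 \<gamma>B \<and> is_CM 1 \<gamma>C \<and>
     loewner_ge (cmat \<gamma>) (cmat (dsum \<gamma>A (dsum \<gamma>B \<gamma>C))))"

definition pinv :: "complex mat \<Rightarrow> complex mat" where
  "pinv M = (THE X. X \<in> carrier_mat (dim_col M) (dim_row M) \<and>
     M * X * M = M \<and> X * M * X = X \<and>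
     mat_adjoint (M * X) = M * X \<and> mat_adjoint (X * M) = X * M)"

text \<open>Blocks: gamma = [[A, C], [C^T, B]], A 2x2 (mode A), B 4x4 (modes B,C), C 2x4.\<close>
definition blkA :: "real mat \<Rightarrow> real mat" where "blkA \<gamma> = fst (split_block \<gamma> 2 2)"
definition blkC :: "real mat \<Rightarrow> real mat" where "blkC \<gamma> = fst (snd (split_block \<gamma> 2 2))"
definition blkB :: "real mat \<Rightarrow> real mat" where "blkB \<gamma> = snd (snd (snd (split_block \<gamma> 2 2)))"

text \<open>N = A - C (B - i J_BC)^+ C^T and N~ = A - C (B - i J~_BC)^+ C^T,
  with J_BC = J1 \<oplus> J1 and J~_BC = J1 \<oplus> (-J1).\<close>
definition Nmat :: "real mat \<Rightarrow> complex mat" where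
  "Nmat \<gamma> = cmat (blkA \<gamma>) -
     cmat (blkC \<gamma>) * pinv (cmat (blkB \<gamma>) - \<i> \<cdot>\<^sub>m Jmodes 2 {}) * cmat (transpose_mat (blkC \<gamma>))"

definition Ntmat :: "real mat \<Rightarrow> complex mat" where
  "Ntmat \<gamma> = cmat (blkA \<gamma>) -
     cmat (blkC \<gamma>) * pinv (cmat (blkB \<gamma>) - \<i> \<cdot>\<^sub>m Jmodes 2 {1}) * cmat (transpose_mat (blkC \<gamma>))"

end

theory Submission
  imports Defs
begin

lemma adj_eq: "mat_adjoint (A::complex mat) = mat (dim_col A) (dim_row A) (\<lambda>(i,j). cnj (A $$ (j,i)))"
  unfolding mat_adjoint_def mat_of_rows_def by (rule eq_matI) (auto simp: conjugate_complex_def)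

lemma adj_dims[simp]: "dim_row (mat_adjoint (A::complex mat)) = dim_col A"
  "dim_col (mat_adjoint (A::complex mat)) = dim_row A"
  by (auto simp: adj_eq)

lemma adj_index[simp]: "i < dim_col A \<Longrightarrow> j < dim_row A \<Longrightarrow> mat_adjoint (A::complex mat) $$ (i,j) = cnj (A $$ (j,i))"
  by (auto simp: adj_eq)

lemma adj_carrier[simp]: "(A::complex mat) \<in> carrier_mat n m \<Longrightarrow> mat_adjoint A \<in> carrier_mat m n"
  unfolding carrier_mat_def by simp

lemma adj_adj[simp]: "mat_adjoint (mat_adjoint (A::complex mat)) = A"
proof (rule eq_matI)
  fix i j assume "i < dim_row A" "j < dim_col A"
  then show "mat_adjoint (mat_adjoint A) $$ (i, j) = A $$ (i, j)" by simp
qed simp_all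

lemma adj_mult: assumes "(A::complex mat) \<in> carrier_mat n k" "B \<in> carrier_mat k m"
  shows "mat_adjoint (A * B) = mat_adjoint B * mat_adjoint A"
proof (rule eq_matI)
  fix i j assume ij: "i < dim_row (mat_adjoint B * mat_adjoint A)" "j < dim_col (mat_adjoint B * mat_adjoint A)"
  then have i: "i < m" and j: "j < n" using assms by auto
  have "mat_adjoint (A * B) $$ (i,j) = cnj (\<Sum>l<k. A $$ (j,l) * B $$ (l,i))"
    using assms i j by (auto simp: scalar_prod_def lessThan_atLeast0)
  also have "\<dots> = (\<Sum>l<k. cnj (B $$ (l,i)) * cnj (A $$ (j,l)))"
    by (simp add: mult.commute)
  also have "\<dots> = (mat_adjoint B * mat_adjoint A) $$ (i,j)"
    using assms i j by (auto simp: scalar_prod_def lessThan_atLeast0)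
  finally show "mat_adjoint (A * B) $$ (i,j) = (mat_adjoint B * mat_adjoint A) $$ (i,j)" .
qed (use assms in auto)

lemma adj_add: assumes "(A::complex mat) \<in> carrier_mat n m" "B \<in> carrier_mat n m"
  shows "mat_adjoint (A + B) = mat_adjoint A + mat_adjoint B"
  by (rule eq_matI) (use assms in auto)

lemma adj_minus: assumes "(A::complex mat) \<in> carrier_mat n m" "B \<in> carrier_mat n m"
  shows "mat_adjoint (A - B) = mat_adjoint A - mat_adjoint B"
  by (rule eq_matI) (use assms in auto)

lemma adj_smult: "mat_adjoint (c \<cdot>\<^sub>m (A::complex mat)) = cnj c \<cdot>\<^sub>m mat_adjoint A"
  by (rule eq_matI) auto

lemma adj_zero[simp]: "mat_adjoint (0\<^sub>m n m :: complex mat) = 0\<^sub>m m n"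
  by (rule eq_matI) auto

lemma cmat_carrier[simp]: "cmat M \<in> carrier_mat n m \<longleftrightarrow> M \<in> carrier_mat n m"
  unfolding carrier_mat_def cmat_def by simp

lemma cmat_dims[simp]: "dim_row (cmat M) = dim_row M" "dim_col (cmat M) = dim_col M"
  by (auto simp: cmat_def)

lemma cmat_index[simp]: "i < dim_row M \<Longrightarrow> j < dim_col M \<Longrightarrow> cmat M $$ (i,j) = complex_of_real (M $$ (i,j))"
  by (auto simp: cmat_def)

lemma adj_cmat: "mat_adjoint (cmat M) = cmat (transpose_mat M)"
  by (rule eq_matI) auto

lemma cmat_minus: assumes "A \<in> carrier_mat n m" "B \<in> carrier_mat n m"
  shows "cmat (A - B) = cmat A - cmat B"
  by (rule eq_matI) (use assms in auto)

lemma cmat_add: assumes "A \<in> carrier_mat n m" "B \<in> carrier_mat n m"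
  shows "cmat (A + B) = cmat A + cmat B"
  by (rule eq_matI) (use assms in auto)

lemma cmat_smult: "cmat (c \<cdot>\<^sub>m A) = complex_of_real c \<cdot>\<^sub>m cmat A"
  by (rule eq_matI) auto

lemma ip_adj: assumes A: "(A::complex mat) \<in> carrier_mat n m" and u: "u \<in> carrier_vec m" and v: "v \<in> carrier_vec n"
  shows "(A *\<^sub>v u) \<bullet>c v = u \<bullet>c (mat_adjoint A *\<^sub>v v)"
proof -
  have "(A *\<^sub>v u) \<bullet>c v = (\<Sum>i<n. (\<Sum>j<m. A $$ (i,j) * u $ j) * cnj (v $ i))"
    using A u v by (simp add: scalar_prod_def lessThan_atLeast0 conjugate_complex_def)
  also have "\<dots> = (\<Sum>i<n. \<Sum>j<m. A $$ (i,j) * u $ j * cnj (v $ i))"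
    by (simp add: sum_distrib_right)
  also have "\<dots> = (\<Sum>j<m. \<Sum>i<n. A $$ (i,j) * u $ j * cnj (v $ i))"
    by (rule sum.swap)
  also have "\<dots> = (\<Sum>j<m. u $ j * (\<Sum>i<n. A $$ (i,j) * cnj (v $ i)))"
    by (simp add: sum_distrib_left mult_ac)
  also have "\<dots> = (\<Sum>j<m. u $ j * cnj (\<Sum>i<n. cnj (A $$ (i,j)) * v $ i))"
    by (simp add: cnj_sum)
  also have "\<dots> = u \<bullet>c (mat_adjoint A *\<^sub>v v)"
    using A u v by (simp add: scalar_prod_def lessThan_atLeast0 conjugate_complex_def)
  finally show ?thesis .
qed

lemma ip_comm: assumes "u \<in> carrier_vec n" "(v::complex vec) \<in> carrier_vec n"
  shows "u \<bullet>c v = cnj (v \<bullet>c u)"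
  using assms by (auto simp: scalar_prod_def conjugate_complex_def mult.commute)

lemma smult_mat_vec: "dim_vec v = dim_col A \<Longrightarrow> ((c::complex) \<cdot>\<^sub>m A) *\<^sub>v v = c \<cdot>\<^sub>v (A *\<^sub>v v)"
  by (rule eq_vecI) (simp_all add: scalar_prod_def sum_distrib_left mult.assoc)

lemma zero_mat_vec: "v \<in> carrier_vec m \<Longrightarrow> (0\<^sub>m n m :: complex mat) *\<^sub>v v = 0\<^sub>v n"
  by (rule eq_vecI) (simp_all add: scalar_prod_def)

lemma ip_add_left: assumes "u \<in> carrier_vec n" "v \<in> carrier_vec n" "(w::complex vec) \<in> carrier_vec n"
  shows "(u + v) \<bullet>c w = u \<bullet>c w + v \<bullet>c w"
  using assms by (simp add: scalar_prod_def sum.distrib algebra_simps)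

lemma ip_add_right: assumes "u \<in> carrier_vec n" "v \<in> carrier_vec n" "(w::complex vec) \<in> carrier_vec n"
  shows "u \<bullet>c (v + w) = u \<bullet>c v + u \<bullet>c w"
  using assms by (simp add: scalar_prod_def sum.distrib algebra_simps conjugate_complex_def)

lemma ip_minus_left: assumes "u \<in> carrier_vec n" "v \<in> carrier_vec n" "(w::complex vec) \<in> carrier_vec n"
  shows "(u - v) \<bullet>c w = u \<bullet>c w - v \<bullet>c w"
  using assms by (simp add: scalar_prod_def sum_subtractf algebra_simps)

lemma ip_minus_right: assumes "u \<in> carrier_vec n" "v \<in> carrier_vec n" "(w::complex vec) \<in> carrier_vec n"
  shows "u \<bullet>c (v - w) = u \<bullet>c v - u \<bullet>c w"
  using assms by (simp add: scalar_prod_def sum_subtractf algebra_simps conjugate_complex_def)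

lemma ip_smult_left: assumes "u \<in> carrier_vec n" "(w::complex vec) \<in> carrier_vec n"
  shows "(c \<cdot>\<^sub>v u) \<bullet>c w = c * (u \<bullet>c w)"
  using assms by (simp add: scalar_prod_def sum_distrib_left algebra_simps)

lemma ip_smult_right: assumes "u \<in> carrier_vec n" "(w::complex vec) \<in> carrier_vec n"
  shows "u \<bullet>c (c \<cdot>\<^sub>v w) = cnj c * (u \<bullet>c w)"
  using assms by (simp add: scalar_prod_def sum_distrib_left algebra_simps conjugate_complex_def)

lemma ip_uminus_left: assumes "u \<in> carrier_vec n" "(w::complex vec) \<in> carrier_vec n"
  shows "(- u) \<bullet>c w = - (u \<bullet>c w)"
  using assms by (simp add: scalar_prod_def sum_negf)

lemma ip_uminus_right: assumes "u \<in> carrier_vec n" "(w::complex vec) \<in> carrier_vec n"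
  shows "u \<bullet>c (- w) = - (u \<bullet>c w)"
  using assms by (simp add: scalar_prod_def sum_negf conjugate_complex_def)

lemma ip_zero_left: "(w::complex vec) \<in> carrier_vec n \<Longrightarrow> (0\<^sub>v n) \<bullet>c w = 0"
  by (simp add: scalar_prod_def)

lemma ip_zero_right: "(w::complex vec) \<in> carrier_vec n \<Longrightarrow> w \<bullet>c (0\<^sub>v n) = 0"
  by (simp add: scalar_prod_def)

lemma ip_self_real: "(v::complex vec) \<bullet>c v = complex_of_real (\<Sum>i<dim_vec v. (cmod (v $ i))\<^sup>2)"
proof -
  have "(v::complex vec) \<bullet>c v = (\<Sum>i<dim_vec v. v $ i * cnj (v $ i))"
    by (simp add: scalar_prod_def lessThan_atLeast0 conjugate_complex_def)
  also have "\<dots> = (\<Sum>i<dim_vec v. complex_of_real ((cmod (v $ i))\<^sup>2))"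
    by (rule sum.cong) (simp_all only: complex_norm_square)
  finally show ?thesis by simp
qed

lemma ip_self_nonneg: "0 \<le> Re ((v::complex vec) \<bullet>c v)"
  unfolding ip_self_real by (simp add: sum_nonneg)

lemma ip_self_zero: assumes "Re ((v::complex vec) \<bullet>c v) = 0" shows "v = 0\<^sub>v (dim_vec v)"
proof (rule eq_vecI)
  fix i assume i: "i < dim_vec (0\<^sub>v (dim_vec v))"
  have "(\<Sum>i<dim_vec v. (cmod (v $ i))\<^sup>2) = 0" using assms unfolding ip_self_real by simp
  then have "\<forall>i\<in>{..<dim_vec v}. (cmod (v $ i))\<^sup>2 = 0"
    by (subst sum_nonneg_eq_0_iff[symmetric]) auto
  then show "v $ i = 0\<^sub>v (dim_vec v) $ i" using i by simp
qed simp

definition herm :: "complex mat \<Rightarrow> bool" where "herm A \<longleftrightarrow> mat_adjoint A = A"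

lemma psdD: assumes "psd M" 
  shows "M \<in> carrier_mat (dim_row M) (dim_row M)" "mat_adjoint M = M" 
    "\<And>v. v \<in> carrier_vec (dim_row M) \<Longrightarrow> 0 \<le> Re ((M *\<^sub>v v) \<bullet>c v)"
  using assms unfolding psd_def by auto

lemma psdI: assumes "M \<in> carrier_mat n n" "mat_adjoint M = M" 
    "\<And>v. v \<in> carrier_vec n \<Longrightarrow> 0 \<le> Re ((M *\<^sub>v v) \<bullet>c v)"
  shows "psd M"
  using assms unfolding psd_def by auto

lemma psd_add: assumes A: "psd A" and B: "psd B" and "A \<in> carrier_mat n n" "B \<in> carrier_mat n n"
  shows "psd (A + B)"
proof (rule psdI)
  show "A + B \<in> carrier_mat n n" using assms by simp
  show "mat_adjoint (A + B) = A + B" using assms psdD[OF A] psdD[OF B] adj_add by metis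
  fix v :: "complex vec" assume v: "v \<in> carrier_vec n"
  have "((A + B) *\<^sub>v v) \<bullet>c v = (A *\<^sub>v v) \<bullet>c v + (B *\<^sub>v v) \<bullet>c v"
    using assms v by (simp add: add_mult_distrib_mat_vec ip_add_left[of _ n])
  then show "0 \<le> Re (((A + B) *\<^sub>v v) \<bullet>c v)" using psdD(3)[OF A] psdD(3)[OF B] assms v by simp
qed

lemma psd_congr: assumes M: "psd M" "M \<in> carrier_mat n n" and P: "P \<in> carrier_mat k n"
  shows "psd (P * M * mat_adjoint P)"
proof (rule psdI)
  have a: "mat_adjoint P \<in> carrier_mat n k" using assms by simp
  show "P * M * mat_adjoint P \<in> carrier_mat k k" using mult_carrier_mat[OF mult_carrier_mat[OF P M(2)] a] .
  show "mat_adjoint (P * M * mat_adjoint P) = P * M * mat_adjoint P"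
  proof -
    have h: "mat_adjoint M = M" using psdD(2)[OF M(1)] .
    have "mat_adjoint (P * M * mat_adjoint P) = mat_adjoint (mat_adjoint P) * mat_adjoint (P * M)"
      by (rule adj_mult[of "P * M" k n "mat_adjoint P" k]) (use assms a in auto)
    also have "mat_adjoint (P * M) = mat_adjoint M * mat_adjoint P"
      by (rule adj_mult[of P k n M n]) (use assms in auto)
    finally have "mat_adjoint (P * M * mat_adjoint P) = P * (M * mat_adjoint P)" using h by simp
    then show ?thesis using assoc_mult_mat[OF P M(2) a] by simp
  qed
  fix v :: "complex vec" assume v: "v \<in> carrier_vec k"
  have b: "mat_adjoint P *\<^sub>v v \<in> carrier_vec n" using a v by simp
  have c: "M *\<^sub>v (mat_adjoint P *\<^sub>v v) \<in> carrier_vec n" using M(2) b by simp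
  have "(P * M * mat_adjoint P) *\<^sub>v v = P *\<^sub>v (M *\<^sub>v (mat_adjoint P *\<^sub>v v))"
    using assoc_mult_mat_vec[OF _ a v, of "P * M" k] assoc_mult_mat_vec[OF P M(2) b] assms by simp
  moreover have "(P *\<^sub>v (M *\<^sub>v (mat_adjoint P *\<^sub>v v))) \<bullet>c v = (M *\<^sub>v (mat_adjoint P *\<^sub>v v)) \<bullet>c (mat_adjoint P *\<^sub>v v)"
    by (rule ip_adj[OF P c v])
  moreover have "mat_adjoint P *\<^sub>v v \<in> carrier_vec (dim_row M)" using M(2) b by simp
  ultimately show "0 \<le> Re (((P * M * mat_adjoint P) *\<^sub>v v) \<bullet>c v)" using psdD(3)[OF M(1)] by simp
qed

lemma psd_smult: assumes M: "psd M" and c: "0 \<le> c"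
  shows "psd (complex_of_real c \<cdot>\<^sub>m M)"
proof -
  define n where "n = dim_row M"
  have Mc: "M \<in> carrier_mat n n" using psdD(1)[OF M] by (simp only: n_def)
  show ?thesis
  proof (rule psdI)
    show "complex_of_real c \<cdot>\<^sub>m M \<in> carrier_mat n n" using Mc by simp
    show "mat_adjoint (complex_of_real c \<cdot>\<^sub>m M) = complex_of_real c \<cdot>\<^sub>m M" using psdD(2)[OF M] by (simp add: adj_smult)
    fix v :: "complex vec" assume v: "v \<in> carrier_vec n"
    have "((complex_of_real c \<cdot>\<^sub>m M) *\<^sub>v v) \<bullet>c v = complex_of_real c * ((M *\<^sub>v v) \<bullet>c v)"
      using v Mc by (simp add: smult_mat_vec ip_smult_left[of _ n])
    then show "0 \<le> Re (((complex_of_real c \<cdot>\<^sub>m M) *\<^sub>v v) \<bullet>c v)" using psdD(3)[OF M] v n_def c by simp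
  qed
qed

lemma psd_zero: "psd (0\<^sub>m n n)"
  by (rule psdI[of _ n]) (auto simp: zero_mat_vec ip_zero_left)

lemma psd_conj: assumes M: "psd M" shows "psd (map_mat cnj M)"
proof -
  define n where "n = dim_row M"
  have Mc: "M \<in> carrier_mat n n" using psdD(1)[OF M] by (simp only: n_def)
  have "mat_adjoint M = M" using psdD(2)[OF M] .
  then have e: "\<And>i j. i < n \<Longrightarrow> j < n \<Longrightarrow> cnj (M $$ (j,i)) = M $$ (i,j)"
    using Mc by (metis adj_index carrier_matD(1) carrier_matD(2))
  show ?thesis
  proof (rule psdI)
    show "map_mat cnj M \<in> carrier_mat n n" using Mc by (intro carrier_matI) auto
    show "mat_adjoint (map_mat cnj M) = map_mat cnj M"
      by (rule eq_matI) (use Mc e in auto)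
    fix v :: "complex vec" assume v: "v \<in> carrier_vec n"
    let ?w = "map_vec cnj v"
    have "((map_mat cnj M) *\<^sub>v v) \<bullet>c v = cnj ((M *\<^sub>v ?w) \<bullet>c ?w)"
      using v Mc by (simp add: scalar_prod_def cnj_sum conjugate_complex_def)
    then show "0 \<le> Re (((map_mat cnj M) *\<^sub>v v) \<bullet>c v)" using psdD(3)[OF M, of ?w] v n_def by simp
  qed
qed

lemma conj_append: "conjugate (u @\<^sub>v (w::complex vec)) = conjugate u @\<^sub>v conjugate w"
  unfolding append_vec_def Let_def by (rule eq_vecI) auto

lemma mv_zero: "(A::complex mat) \<in> carrier_mat n k \<Longrightarrow> A *\<^sub>v 0\<^sub>v k = 0\<^sub>v n"
  by (rule eq_vecI) (auto simp: scalar_prod_def)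

lemma ip_append: assumes "u \<in> carrier_vec k" "w \<in> carrier_vec m" "u' \<in> carrier_vec k" "(w'::complex vec) \<in> carrier_vec m"
  shows "(u @\<^sub>v w) \<bullet>c (u' @\<^sub>v w') = u \<bullet>c u' + w \<bullet>c w'"
  unfolding conj_append by (rule scalar_prod_append) (use assms in auto)

lemma mv_uminus: assumes "(v::complex vec) \<in> carrier_vec m" "A \<in> carrier_mat n m"
  shows "A *\<^sub>v (- v) = - (A *\<^sub>v v)"
  by (rule eq_vecI) (use assms in \<open>auto simp: scalar_prod_def sum_negf\<close>)

lemma qf_four_block: assumes A: "(A::complex mat) \<in> carrier_mat k k" and B: "B \<in> carrier_mat k m"
  and C: "C \<in> carrier_mat m k" and D: "D \<in> carrier_mat m m" and u: "u \<in> carrier_vec k" and w: "w \<in> carrier_vec m"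
  shows "(four_block_mat A B C D *\<^sub>v (u @\<^sub>v w)) \<bullet>c (u @\<^sub>v w) =
    (A *\<^sub>v u) \<bullet>c u + (B *\<^sub>v w) \<bullet>c u + (C *\<^sub>v u) \<bullet>c w + (D *\<^sub>v w) \<bullet>c w"
proof -
  have "four_block_mat A B C D *\<^sub>v (u @\<^sub>v w) = (A *\<^sub>v u + B *\<^sub>v w) @\<^sub>v (C *\<^sub>v u + D *\<^sub>v w)"
    by (rule four_block_mat_mult_vec[OF A B C D u w])
  moreover have "((A *\<^sub>v u + B *\<^sub>v w) @\<^sub>v (C *\<^sub>v u + D *\<^sub>v w)) \<bullet>c (u @\<^sub>v w)
     = (A *\<^sub>v u + B *\<^sub>v w) \<bullet>c u + (C *\<^sub>v u + D *\<^sub>v w) \<bullet>c w"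
    by (rule ip_append) (use assms in auto)
  moreover have "(A *\<^sub>v u + B *\<^sub>v w) \<bullet>c u = (A *\<^sub>v u) \<bullet>c u + (B *\<^sub>v w) \<bullet>c u"
    by (rule ip_add_left[of _ k]) (use assms in auto)
  moreover have "(C *\<^sub>v u + D *\<^sub>v w) \<bullet>c w = (C *\<^sub>v u) \<bullet>c w + (D *\<^sub>v w) \<bullet>c w"
    by (rule ip_add_left[of _ m]) (use assms in auto)
  ultimately show ?thesis by simp
qed

lemma adj_four_block: assumes A: "(A::complex mat) \<in> carrier_mat k k" and B: "B \<in> carrier_mat k m"
  and C: "C \<in> carrier_mat m k" and D: "D \<in> carrier_mat m m"
  shows "mat_adjoint (four_block_mat A B C D) = four_block_mat (mat_adjoint A) (mat_adjoint C) (mat_adjoint B) (mat_adjoint D)"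
  by (rule eq_matI) (use assms in auto)

lemma four_block_eqD: assumes A: "(A::complex mat) \<in> carrier_mat k k" and B: "B \<in> carrier_mat k m"
  and C: "C \<in> carrier_mat m k" and D: "D \<in> carrier_mat m m"
  and A': "(A'::complex mat) \<in> carrier_mat k k" and B': "B' \<in> carrier_mat k m"
  and C': "C' \<in> carrier_mat m k" and D': "D' \<in> carrier_mat m m"
  and eq: "four_block_mat A B C D = four_block_mat A' B' C' D'"
  shows "A = A'" "B = B'" "C = C'" "D = D'"
proof -
  have e: "\<And>i j. i < k + m \<Longrightarrow> j < k + m \<Longrightarrow> four_block_mat A B C D $$ (i,j) = four_block_mat A' B' C' D' $$ (i,j)"
    using eq by simp
  show "A = A'"
  proof (rule eq_matI)
    fix i j assume "i < dim_row A'" "j < dim_col A'"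
    then show "A $$ (i,j) = A' $$ (i,j)" using e[of i j] A B C D A' B' C' D' by auto
  qed (use assms in auto)
  show "B = B'"
  proof (rule eq_matI)
    fix i j assume "i < dim_row B'" "j < dim_col B'"
    then show "B $$ (i,j) = B' $$ (i,j)" using e[of i "j + k"] A B C D A' B' C' D' by auto
  qed (use assms in auto)
  show "C = C'"
  proof (rule eq_matI)
    fix i j assume "i < dim_row C'" "j < dim_col C'"
    then show "C $$ (i,j) = C' $$ (i,j)" using e[of "i + k" j] A B C D A' B' C' D' by auto
  qed (use assms in auto)
  show "D = D'"
  proof (rule eq_matI)
    fix i j assume "i < dim_row D'" "j < dim_col D'"
    then show "D $$ (i,j) = D' $$ (i,j)" using e[of "i + k" "j + k"] A B C D A' B' C' D' by auto
  qed (use assms in auto)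
qed

lemma psd_four_block_D: assumes A: "(A::complex mat) \<in> carrier_mat k k" and B: "B \<in> carrier_mat k m"
  and C: "C \<in> carrier_mat m k" and D: "D \<in> carrier_mat m m" and P: "psd (four_block_mat A B C D)"
  shows "psd D" "psd A" "C = mat_adjoint B"
proof -
  have h: "mat_adjoint (four_block_mat A B C D) = four_block_mat A B C D" using psdD(2)[OF P] .
  then have h2: "four_block_mat (mat_adjoint A) (mat_adjoint C) (mat_adjoint B) (mat_adjoint D) = four_block_mat A B C D"
    using adj_four_block[OF A B C D] by simp
  note eqs = four_block_eqD[OF _ _ _ _ A B C D h2]
  have hD: "mat_adjoint D = D" and hA: "mat_adjoint A = A" and hB: "mat_adjoint B = C"
    using eqs assms by auto
  have dimP: "dim_row (four_block_mat A B C D) = k + m" using A D by simp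
  show "psd D"
  proof (rule psdI[OF D hD])
    fix v :: "complex vec" assume v: "v \<in> carrier_vec m"
    have z: "0\<^sub>v k \<in> carrier_vec k" by simp
    have "0 \<le> Re ((four_block_mat A B C D *\<^sub>v (0\<^sub>v k @\<^sub>v v)) \<bullet>c (0\<^sub>v k @\<^sub>v v))"
      using psdD(3)[OF P] v dimP by simp
    also have "(four_block_mat A B C D *\<^sub>v (0\<^sub>v k @\<^sub>v v)) \<bullet>c (0\<^sub>v k @\<^sub>v v) = (D *\<^sub>v v) \<bullet>c v"
      using qf_four_block[OF A B C D z v] A B C D v by (simp add: ip_zero_left ip_zero_right mv_zero)
    finally show "0 \<le> Re ((D *\<^sub>v v) \<bullet>c v)" .
  qed
  show "psd A"
  proof (rule psdI[OF A hA])
    fix v :: "complex vec" assume v: "v \<in> carrier_vec k"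
    have z: "0\<^sub>v m \<in> carrier_vec m" by simp
    have "0 \<le> Re ((four_block_mat A B C D *\<^sub>v (v @\<^sub>v 0\<^sub>v m)) \<bullet>c (v @\<^sub>v 0\<^sub>v m))"
      using psdD(3)[OF P] v dimP by simp
    also have "(four_block_mat A B C D *\<^sub>v (v @\<^sub>v 0\<^sub>v m)) \<bullet>c (v @\<^sub>v 0\<^sub>v m) = (A *\<^sub>v v) \<bullet>c v"
      using qf_four_block[OF A B C D v z] A B C D v by (simp add: ip_zero_left ip_zero_right mv_zero)
    finally show "0 \<le> Re ((A *\<^sub>v v) \<bullet>c v)" .
  qed
  show "C = mat_adjoint B" using hB by simp
qed

lemma mat_eq_by_vec: assumes A: "(A::complex mat) \<in> carrier_mat n m" and B: "B \<in> carrier_mat n m"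
  and h: "\<And>v. v \<in> carrier_vec m \<Longrightarrow> A *\<^sub>v v = B *\<^sub>v v"
  shows "A = B"
proof (rule eq_matI)
  fix i j assume i: "i < dim_row B" and j: "j < dim_col B"
  have "A $$ (i,j) = (A *\<^sub>v unit_vec m j) $ i" using A B i j by simp
  also have "\<dots> = (B *\<^sub>v unit_vec m j) $ i" using h[of "unit_vec m j"] by simp
  also have "\<dots> = B $$ (i,j)" using A B i j by simp
  finally show "A $$ (i,j) = B $$ (i,j)" .
qed (use A B in auto)

lemma adj_sandwich: assumes C: "(C::complex mat) \<in> carrier_mat k m" and G: "G \<in> carrier_mat m m"
  and hG: "mat_adjoint G = G"
  shows "mat_adjoint (C * G * mat_adjoint C) = C * G * mat_adjoint C"
proof -
  have a: "mat_adjoint C \<in> carrier_mat m k" using C by simp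
  have "mat_adjoint (C * G * mat_adjoint C) = mat_adjoint (mat_adjoint C) * mat_adjoint (C * G)"
    by (rule adj_mult[of "C * G" k m "mat_adjoint C" k]) (use C G a in auto)
  also have "mat_adjoint (C * G) = mat_adjoint G * mat_adjoint C"
    by (rule adj_mult[of C k m G m]) (use C G in auto)
  finally have "mat_adjoint (C * G * mat_adjoint C) = C * (G * mat_adjoint C)" using hG by simp
  then show ?thesis using assoc_mult_mat[OF C G a] by simp
qed

lemma minus_cancel_mat: assumes "(A::complex mat) \<in> carrier_mat n m" "B \<in> carrier_mat n m" "T \<in> carrier_mat n m"
  and "A - T = B - T" shows "A = B"
proof (rule eq_matI)
  fix i j assume ij: "i < dim_row B" "j < dim_col B"
  have "(A - T) $$ (i,j) = (B - T) $$ (i,j)" using assms(4) by simp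
  then show "A $$ (i,j) = B $$ (i,j)" using assms(1-3) ij by simp
qed (use assms in auto)

lemma schur_fwd: assumes X: "(X::complex mat) \<in> carrier_mat k k" and C: "C \<in> carrier_mat k m"
  and Y: "Y \<in> carrier_mat m m" and G: "G \<in> carrier_mat m m"
  and P: "psd (four_block_mat X C (mat_adjoint C) Y)" and hG: "mat_adjoint G = G" and GYG: "G * Y * G = G"
  shows "psd (X - C * G * mat_adjoint C)"
proof -
  have Ca: "mat_adjoint C \<in> carrier_mat m k" using C by simp
  have CGC: "C * G * mat_adjoint C \<in> carrier_mat k k" using C G Ca by (meson mult_carrier_mat)
  have hX: "mat_adjoint X = X" using psdD(2)[OF psd_four_block_D(2)[OF X C Ca Y P]] .
  have dimP: "dim_row (four_block_mat X C (mat_adjoint C) Y) = k + m" using X Y by simp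
  show ?thesis
  proof (rule psdI)
    show "X - C * G * mat_adjoint C \<in> carrier_mat k k" by (rule minus_carrier_mat[OF CGC])
    show "mat_adjoint (X - C * G * mat_adjoint C) = X - C * G * mat_adjoint C"
      using adj_minus[OF X CGC] hX adj_sandwich[OF C G hG] by simp
    fix u :: "complex vec" assume u: "u \<in> carrier_vec k"
    define z where "z = mat_adjoint C *\<^sub>v u"
    define w where "w = G *\<^sub>v z"
    have z: "z \<in> carrier_vec m" unfolding z_def using Ca u by simp
    have w: "w \<in> carrier_vec m" unfolding w_def using G z by simp
    have mw: "- w \<in> carrier_vec m" using w by simp
    have q: "(four_block_mat X C (mat_adjoint C) Y *\<^sub>v (u @\<^sub>v - w)) \<bullet>c (u @\<^sub>v - w) =
      (X *\<^sub>v u) \<bullet>c u + (C *\<^sub>v (- w)) \<bullet>c u + (mat_adjoint C *\<^sub>v u) \<bullet>c (- w) + (Y *\<^sub>v (- w)) \<bullet>c (- w)"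
      by (rule qf_four_block[OF X C Ca Y u mw])
    have t2: "(C *\<^sub>v (- w)) \<bullet>c u = - (w \<bullet>c z)"
    proof -
      have "(C *\<^sub>v (- w)) \<bullet>c u = - ((C *\<^sub>v w) \<bullet>c u)"
        using mv_uminus[OF w C] ip_uminus_left[of _ k] C w u by simp
      also have "(C *\<^sub>v w) \<bullet>c u = w \<bullet>c z" unfolding z_def by (rule ip_adj[OF C w u])
      finally show ?thesis .
    qed
    have gz: "(G *\<^sub>v z) \<bullet>c z = z \<bullet>c (G *\<^sub>v z)" using ip_adj[OF G z z] hG by simp
    have t3: "(mat_adjoint C *\<^sub>v u) \<bullet>c (- w) = - (w \<bullet>c z)"
      using ip_uminus_right[OF z w] gz unfolding z_def[symmetric] w_def by simp
    have GYw: "G *\<^sub>v (Y *\<^sub>v w) = w"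
    proof -
      have "G *\<^sub>v (Y *\<^sub>v w) = (G * Y * G) *\<^sub>v z"
        unfolding w_def using G Y z by (simp add: assoc_mult_mat_vec[of _ m m _ m])
      then show ?thesis using GYG w_def by simp
    qed
    have t4: "(Y *\<^sub>v (- w)) \<bullet>c (- w) = w \<bullet>c z"
    proof -
      have Yw: "Y *\<^sub>v w \<in> carrier_vec m" using Y w by simp
      have "(Y *\<^sub>v (- w)) \<bullet>c (- w) = (Y *\<^sub>v w) \<bullet>c w"
        using mv_uminus[OF w Y] ip_uminus_left[OF Yw mw] ip_uminus_right[OF Yw w] by simp
      also have "\<dots> = (Y *\<^sub>v w) \<bullet>c (G *\<^sub>v z)" unfolding w_def ..
      also have "\<dots> = (G *\<^sub>v (Y *\<^sub>v w)) \<bullet>c z" using ip_adj[OF G Yw z] hG by simp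
      finally show ?thesis using GYw by simp
    qed
    have target: "((X - C * G * mat_adjoint C) *\<^sub>v u) \<bullet>c u = (X *\<^sub>v u) \<bullet>c u - w \<bullet>c z"
    proof -
      have "(X - C * G * mat_adjoint C) *\<^sub>v u = X *\<^sub>v u - (C * G * mat_adjoint C) *\<^sub>v u"
        by (rule minus_mult_distrib_mat_vec[OF X CGC u])
      moreover have "(C * G * mat_adjoint C) *\<^sub>v u = C *\<^sub>v w"
        unfolding w_def using assoc_mult_mat_vec[OF mult_carrier_mat[OF C G] Ca u] assoc_mult_mat_vec[OF C G z]
        unfolding z_def by simp
      moreover have "(X *\<^sub>v u - C *\<^sub>v w) \<bullet>c u = (X *\<^sub>v u) \<bullet>c u - (C *\<^sub>v w) \<bullet>c u"
        by (rule ip_minus_left[of _ k]) (use X C u w in auto)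
      moreover have "(C *\<^sub>v w) \<bullet>c u = w \<bullet>c z" unfolding z_def by (rule ip_adj[OF C w u])
      ultimately show ?thesis by simp
    qed
    have "0 \<le> Re ((four_block_mat X C (mat_adjoint C) Y *\<^sub>v (u @\<^sub>v - w)) \<bullet>c (u @\<^sub>v - w))"
      using psdD(3)[OF P] dimP u mw by simp
    then show "0 \<le> Re (((X - C * G * mat_adjoint C) *\<^sub>v u) \<bullet>c u)"
      using q t2 t3 t4 target by simp
  qed
qed

lemma schur_rev: assumes X: "(X::complex mat) \<in> carrier_mat k k" and C: "C \<in> carrier_mat k m"
  and Y: "Y \<in> carrier_mat m m" and G: "G \<in> carrier_mat m m"
  and PY: "psd Y" and hG: "mat_adjoint G = G" and K: "Y * G * mat_adjoint C = mat_adjoint C"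
  and PS: "psd (X - C * G * mat_adjoint C)"
  shows "psd (four_block_mat X C (mat_adjoint C) Y)"
proof -
  have Ca: "mat_adjoint C \<in> carrier_mat m k" using C by simp
  have CGC: "C * G * mat_adjoint C \<in> carrier_mat k k" using C G Ca by (meson mult_carrier_mat)
  have hY: "mat_adjoint Y = Y" using psdD(2)[OF PY] .
  have hX: "mat_adjoint X = X"
  proof (rule minus_cancel_mat[OF _ X CGC])
    show "mat_adjoint X \<in> carrier_mat k k" using X by simp
    have "mat_adjoint (X - C * G * mat_adjoint C) = X - C * G * mat_adjoint C" using psdD(2)[OF PS] .
    then show "mat_adjoint X - C * G * mat_adjoint C = X - C * G * mat_adjoint C"
      using adj_minus[OF X CGC] adj_sandwich[OF C G hG] by simp
  qed
  have dimS: "dim_row (X - C * G * mat_adjoint C) = k" using X C by simp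
  have dimY: "dim_row Y = m" using Y by simp
  show ?thesis
  proof (rule psdI)
    show "four_block_mat X C (mat_adjoint C) Y \<in> carrier_mat (k + m) (k + m)" using X Y by simp
    show "mat_adjoint (four_block_mat X C (mat_adjoint C) Y) = four_block_mat X C (mat_adjoint C) Y"
      using adj_four_block[OF X C Ca Y] hX hY by simp
    fix x :: "complex vec" assume x: "x \<in> carrier_vec (k + m)"
    define u where "u = vec_first x k"
    define v where "v = vec_last x m"
    have u: "u \<in> carrier_vec k" and v: "v \<in> carrier_vec m" unfolding u_def v_def by auto
    have xuv: "x = u @\<^sub>v v" unfolding u_def v_def using x by simp
    define z where "z = mat_adjoint C *\<^sub>v u"
    define w where "w = G *\<^sub>v z"
    have z: "z \<in> carrier_vec m" unfolding z_def using Ca u by simp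
    have w: "w \<in> carrier_vec m" unfolding w_def using G z by simp
    have vw: "v + w \<in> carrier_vec m" using v w by simp
    have Yv: "Y *\<^sub>v v \<in> carrier_vec m" using Y v by simp
    have Yw_eq: "Y *\<^sub>v w = z"
    proof -
      have "Y *\<^sub>v w = (Y * G * mat_adjoint C) *\<^sub>v u"
        unfolding w_def z_def using assoc_mult_mat_vec[OF mult_carrier_mat[OF Y G] Ca u] assoc_mult_mat_vec[OF Y G z]
        unfolding z_def by simp
      then show ?thesis using K z_def by simp
    qed
    have q: "(four_block_mat X C (mat_adjoint C) Y *\<^sub>v (u @\<^sub>v v)) \<bullet>c (u @\<^sub>v v) =
      (X *\<^sub>v u) \<bullet>c u + (C *\<^sub>v v) \<bullet>c u + z \<bullet>c v + (Y *\<^sub>v v) \<bullet>c v"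
      using qf_four_block[OF X C Ca Y u v] unfolding z_def by simp
    have Cv: "(C *\<^sub>v v) \<bullet>c u = v \<bullet>c z" unfolding z_def by (rule ip_adj[OF C v u])
    have Cw: "(C *\<^sub>v w) \<bullet>c u = w \<bullet>c z" unfolding z_def by (rule ip_adj[OF C w u])
    have r1: "((X - C * G * mat_adjoint C) *\<^sub>v u) \<bullet>c u = (X *\<^sub>v u) \<bullet>c u - w \<bullet>c z"
    proof -
      have "(X - C * G * mat_adjoint C) *\<^sub>v u = X *\<^sub>v u - (C * G * mat_adjoint C) *\<^sub>v u"
        by (rule minus_mult_distrib_mat_vec[OF X CGC u])
      moreover have "(C * G * mat_adjoint C) *\<^sub>v u = C *\<^sub>v w"
        unfolding w_def using assoc_mult_mat_vec[OF mult_carrier_mat[OF C G] Ca u] assoc_mult_mat_vec[OF C G z]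
        unfolding z_def by simp
      moreover have "(X *\<^sub>v u - C *\<^sub>v w) \<bullet>c u = (X *\<^sub>v u) \<bullet>c u - (C *\<^sub>v w) \<bullet>c u"
        by (rule ip_minus_left[of _ k]) (use X C u w in auto)
      ultimately show ?thesis using Cw by simp
    qed
    have r2: "(Y *\<^sub>v (v + w)) \<bullet>c (v + w) = (Y *\<^sub>v v) \<bullet>c v + v \<bullet>c z + z \<bullet>c v + w \<bullet>c z"
    proof -
      have "Y *\<^sub>v (v + w) = Y *\<^sub>v v + z" using mult_add_distrib_mat_vec[OF Y v w] Yw_eq by simp
      then have "(Y *\<^sub>v (v + w)) \<bullet>c (v + w) = (Y *\<^sub>v v + z) \<bullet>c (v + w)" by simp
      also have "\<dots> = (Y *\<^sub>v v) \<bullet>c (v + w) + z \<bullet>c (v + w)" by (rule ip_add_left[OF Yv z vw])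
      also have "(Y *\<^sub>v v) \<bullet>c (v + w) = (Y *\<^sub>v v) \<bullet>c v + (Y *\<^sub>v v) \<bullet>c w" by (rule ip_add_right[OF Yv v w])
      also have "z \<bullet>c (v + w) = z \<bullet>c v + z \<bullet>c w" by (rule ip_add_right[OF z v w])
      also have "(Y *\<^sub>v v) \<bullet>c w = v \<bullet>c z" using ip_adj[OF Y v w] hY Yw_eq by simp
      also have "z \<bullet>c w = w \<bullet>c z" 
        unfolding w_def using ip_adj[OF G z z] hG by simp
      finally show ?thesis by (simp add: algebra_simps)
    qed
    have "(four_block_mat X C (mat_adjoint C) Y *\<^sub>v x) \<bullet>c x =
       ((X - C * G * mat_adjoint C) *\<^sub>v u) \<bullet>c u + (Y *\<^sub>v (v + w)) \<bullet>c (v + w)"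
      unfolding xuv q r1 r2 Cv by (simp add: algebra_simps)
    moreover have "0 \<le> Re (((X - C * G * mat_adjoint C) *\<^sub>v u) \<bullet>c u)" using psdD(3)[OF PS] u dimS by simp
    moreover have "0 \<le> Re ((Y *\<^sub>v (v + w)) \<bullet>c (v + w))" using psdD(3)[OF PY] vw dimY by simp
    ultimately show "0 \<le> Re ((four_block_mat X C (mat_adjoint C) Y *\<^sub>v x) \<bullet>c x)" by simp
  qed
qed

lemma real_quad_aux: fixes a b :: real assumes b: "0 \<le> b" and h: "\<And>t. 0 < t \<Longrightarrow> 0 \<le> t\<^sup>2 * a - 2 * t * b"
  shows "b = 0"
proof (rule ccontr)
  assume "b \<noteq> 0" then have bp: "0 < b" using b by simp
  define t where "t = b / (\<bar>a\<bar> + 1)"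
  have tp: "0 < t" unfolding t_def using bp by simp
  have "t * a \<le> t * \<bar>a\<bar>" using tp by (simp add: mult_left_mono)
  also have "t * \<bar>a\<bar> < b" unfolding t_def using bp
    by (simp add: field_simps)
  finally have "t * a - 2 * b < 0" using bp by simp
  then have "t * (t * a - 2 * b) < 0" using tp by (simp add: mult_pos_neg)
  moreover have "t * (t * a - 2 * b) = t\<^sup>2 * a - 2 * t * b" by (simp add: power2_eq_square algebra_simps)
  ultimately show False using h[OF tp] by simp
qed

lemma kernel_vec: assumes X: "(X::complex mat) \<in> carrier_mat k k" and C: "C \<in> carrier_mat k m"
  and Y: "Y \<in> carrier_mat m m" and P: "psd (four_block_mat X C (mat_adjoint C) Y)"
  and x: "x \<in> carrier_vec m" and Yx: "Y *\<^sub>v x = 0\<^sub>v m"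
  shows "C *\<^sub>v x = 0\<^sub>v k"
proof -
  have Ca: "mat_adjoint C \<in> carrier_mat m k" using C by simp
  define c where "c = C *\<^sub>v x"
  have c: "c \<in> carrier_vec k" unfolding c_def using C x by simp
  have dimP: "dim_row (four_block_mat X C (mat_adjoint C) Y) = k + m" using X Y by simp
  have Xc: "X *\<^sub>v c \<in> carrier_vec k" using X c by simp
  have key: "0 \<le> t\<^sup>2 * Re ((X *\<^sub>v c) \<bullet>c c) - 2 * t * Re (c \<bullet>c c)" if tp: "0 < t" for t :: real
  proof -
    define a where "a = complex_of_real (- t)"
    have ac: "a \<cdot>\<^sub>v c \<in> carrier_vec k" using c by simp
    have q: "(four_block_mat X C (mat_adjoint C) Y *\<^sub>v (a \<cdot>\<^sub>v c @\<^sub>v x)) \<bullet>c (a \<cdot>\<^sub>v c @\<^sub>v x) =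
      (X *\<^sub>v (a \<cdot>\<^sub>v c)) \<bullet>c (a \<cdot>\<^sub>v c) + (C *\<^sub>v x) \<bullet>c (a \<cdot>\<^sub>v c) + (mat_adjoint C *\<^sub>v (a \<cdot>\<^sub>v c)) \<bullet>c x + (Y *\<^sub>v x) \<bullet>c x"
      by (rule qf_four_block[OF X C Ca Y ac x])
    have t1: "(X *\<^sub>v (a \<cdot>\<^sub>v c)) \<bullet>c (a \<cdot>\<^sub>v c) = a * cnj a * ((X *\<^sub>v c) \<bullet>c c)"
    proof -
      have "X *\<^sub>v (a \<cdot>\<^sub>v c) = a \<cdot>\<^sub>v (X *\<^sub>v c)" by (rule mult_mat_vec[OF X c])
      moreover have "(a \<cdot>\<^sub>v (X *\<^sub>v c)) \<bullet>c (a \<cdot>\<^sub>v c) = a * ((X *\<^sub>v c) \<bullet>c (a \<cdot>\<^sub>v c))"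
        by (rule ip_smult_left[OF Xc ac])
      moreover have "(X *\<^sub>v c) \<bullet>c (a \<cdot>\<^sub>v c) = cnj a * ((X *\<^sub>v c) \<bullet>c c)" by (rule ip_smult_right[OF Xc c])
      ultimately show ?thesis by simp
    qed
    have t2: "(C *\<^sub>v x) \<bullet>c (a \<cdot>\<^sub>v c) = cnj a * (c \<bullet>c c)"
      unfolding c_def[symmetric] by (rule ip_smult_right[OF c c])
    have t3: "(mat_adjoint C *\<^sub>v (a \<cdot>\<^sub>v c)) \<bullet>c x = a * (c \<bullet>c c)"
    proof -
      have "mat_adjoint C *\<^sub>v (a \<cdot>\<^sub>v c) = a \<cdot>\<^sub>v (mat_adjoint C *\<^sub>v c)" by (rule mult_mat_vec[OF Ca c])
      moreover have "(a \<cdot>\<^sub>v (mat_adjoint C *\<^sub>v c)) \<bullet>c x = a * ((mat_adjoint C *\<^sub>v c) \<bullet>c x)"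
        by (rule ip_smult_left[of _ m]) (use Ca c x in auto)
      moreover have "(mat_adjoint C *\<^sub>v c) \<bullet>c x = c \<bullet>c (C *\<^sub>v x)" using ip_adj[OF Ca c x] by simp
      ultimately show ?thesis unfolding c_def by simp
    qed
    have t4: "(Y *\<^sub>v x) \<bullet>c x = 0" using Yx x by (simp add: ip_zero_left)
    have cc: "c \<bullet>c c = complex_of_real (Re (c \<bullet>c c))" unfolding ip_self_real by simp
    have "0 \<le> Re ((four_block_mat X C (mat_adjoint C) Y *\<^sub>v (a \<cdot>\<^sub>v c @\<^sub>v x)) \<bullet>c (a \<cdot>\<^sub>v c @\<^sub>v x))"
      using psdD(3)[OF P] dimP ac x by simp
    also have "Re ((four_block_mat X C (mat_adjoint C) Y *\<^sub>v (a \<cdot>\<^sub>v c @\<^sub>v x)) \<bullet>c (a \<cdot>\<^sub>v c @\<^sub>v x))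
       = t\<^sup>2 * Re ((X *\<^sub>v c) \<bullet>c c) - 2 * t * Re (c \<bullet>c c)"
      unfolding q t1 t2 t3 t4 unfolding a_def by (subst cc) (simp add: power2_eq_square)
    finally show ?thesis .
  qed
  have "Re (c \<bullet>c c) = 0" by (rule real_quad_aux[OF ip_self_nonneg key]) 
  then have "c = 0\<^sub>v (dim_vec c)" by (rule ip_self_zero)
  moreover have "dim_vec c = k" using c by auto
  ultimately show ?thesis unfolding c_def by simp
qed

lemma kernel_cond: assumes X: "(X::complex mat) \<in> carrier_mat k k" and C: "C \<in> carrier_mat k m"
  and Y: "Y \<in> carrier_mat m m" and G: "G \<in> carrier_mat m m"
  and P: "psd (four_block_mat X C (mat_adjoint C) Y)" and hG: "mat_adjoint G = G" and YGY: "Y * G * Y = Y"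
  shows "Y * G * mat_adjoint C = mat_adjoint C"
proof -
  have Ca: "mat_adjoint C \<in> carrier_mat m k" using C by simp
  have hY: "mat_adjoint Y = Y" using psdD(2)[OF psd_four_block_D(1)[OF X C Ca Y P]] .
  have CGY: "C * G * Y = C"
  proof (rule mat_eq_by_vec[of _ k m])
    show "C * G * Y \<in> carrier_mat k m" using C G Y by (meson mult_carrier_mat)
    show "C \<in> carrier_mat k m" by (rule C)
    fix x :: "complex vec" assume x: "x \<in> carrier_vec m"
    define y where "y = x - G *\<^sub>v (Y *\<^sub>v x)"
    have Yx: "Y *\<^sub>v x \<in> carrier_vec m" using Y x by simp
    have GYx: "G *\<^sub>v (Y *\<^sub>v x) \<in> carrier_vec m" using G Yx by simp
    have y: "y \<in> carrier_vec m" unfolding y_def using x GYx by simp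
    have "Y *\<^sub>v y = Y *\<^sub>v x - Y *\<^sub>v (G *\<^sub>v (Y *\<^sub>v x))" unfolding y_def by (rule mult_minus_distrib_mat_vec[OF Y x GYx])
    also have "Y *\<^sub>v (G *\<^sub>v (Y *\<^sub>v x)) = (Y * G * Y) *\<^sub>v x"
      using assoc_mult_mat_vec[OF mult_carrier_mat[OF Y G] Y x] assoc_mult_mat_vec[OF Y G Yx] by simp
    finally have "Y *\<^sub>v y = 0\<^sub>v m" using YGY Yx by simp
    then have "C *\<^sub>v y = 0\<^sub>v k" by (rule kernel_vec[OF X C Y P y])
    moreover have "C *\<^sub>v y = C *\<^sub>v x - C *\<^sub>v (G *\<^sub>v (Y *\<^sub>v x))" unfolding y_def by (rule mult_minus_distrib_mat_vec[OF C x GYx])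
    ultimately have "C *\<^sub>v x = C *\<^sub>v (G *\<^sub>v (Y *\<^sub>v x))"
    proof -
      have a: "C *\<^sub>v x \<in> carrier_vec k" using C x by simp
      have b: "C *\<^sub>v (G *\<^sub>v (Y *\<^sub>v x)) \<in> carrier_vec k" using C GYx by simp
      assume h1: "C *\<^sub>v y = 0\<^sub>v k" and h2: "C *\<^sub>v y = C *\<^sub>v x - C *\<^sub>v (G *\<^sub>v (Y *\<^sub>v x))"
      have e: "C *\<^sub>v x - C *\<^sub>v (G *\<^sub>v (Y *\<^sub>v x)) = 0\<^sub>v k" using h1 h2 by simp
      show ?thesis
      proof (rule eq_vecI)
        fix i assume "i < dim_vec (C *\<^sub>v (G *\<^sub>v (Y *\<^sub>v x)))"
        then have i: "i < k" using b C by simp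
        have "(C *\<^sub>v x - C *\<^sub>v (G *\<^sub>v (Y *\<^sub>v x))) $ i = 0" using e i by simp
        moreover have "dim_vec (C *\<^sub>v x) = k" "dim_vec (C *\<^sub>v (G *\<^sub>v (Y *\<^sub>v x))) = k" using C by auto
        ultimately show "(C *\<^sub>v x) $ i = (C *\<^sub>v (G *\<^sub>v (Y *\<^sub>v x))) $ i" using i by simp
      qed (use a b in simp)
    qed
    also have "\<dots> = (C * G * Y) *\<^sub>v x"
      using assoc_mult_mat_vec[OF mult_carrier_mat[OF C G] Y x] assoc_mult_mat_vec[OF C G Yx] by simp
    finally show "(C * G * Y) *\<^sub>v x = C *\<^sub>v x" by simp
  qed
  have "mat_adjoint (C * G * Y) = mat_adjoint Y * mat_adjoint (C * G)"
    by (rule adj_mult[of "C * G" k m Y m]) (use C G Y in \<open>auto intro: mult_carrier_mat\<close>)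
  also have "mat_adjoint (C * G) = mat_adjoint G * mat_adjoint C"
    by (rule adj_mult[of C k m G m]) (use C G in auto)
  finally have "mat_adjoint C = Y * (G * mat_adjoint C)" using CGY hG hY by simp
  then show ?thesis using assoc_mult_mat[OF Y G Ca] by simp
qed

lemma vec_minus_plus: "c \<in> carrier_vec n \<Longrightarrow> a \<in> carrier_vec n \<Longrightarrow> (c - a) + a = (c::complex vec)"
  by (rule eq_vecI) auto

lemma vec_plus_0smult: "x \<in> carrier_vec n \<Longrightarrow> c \<in> carrier_vec n \<Longrightarrow> x + (0::complex) \<cdot>\<^sub>v c = x"
  by (rule eq_vecI) auto

definition outer :: "complex vec \<Rightarrow> complex vec \<Rightarrow> complex mat" where
  "outer u w = mat (dim_vec u) (dim_vec w) (\<lambda>(i,j). u $ i * cnj (w $ j))"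

lemma outer_carrier[simp]: "u \<in> carrier_vec n \<Longrightarrow> w \<in> carrier_vec m \<Longrightarrow> outer u w \<in> carrier_mat n m"
  unfolding outer_def by (auto simp: carrier_vecD)

lemma outer_mult_left: assumes A: "A \<in> carrier_mat n m" and d: "d \<in> carrier_vec m"
  shows "A * outer d w = outer (A *\<^sub>v d) w"
proof (rule eq_matI)
  fix i j assume i: "i < dim_row (outer (A *\<^sub>v d) w)" and j: "j < dim_col (outer (A *\<^sub>v d) w)"
  then have i': "i < n" and j': "j < dim_vec w" using A unfolding outer_def by auto
  show "(A * outer d w) $$ (i, j) = outer (A *\<^sub>v d) w $$ (i, j)"
    using A d i' j' unfolding outer_def
    by (simp add: scalar_prod_def sum_distrib_right mult.assoc)
qed (use A d in \<open>auto simp: outer_def\<close>)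

lemma outer_mult_vec: assumes x: "x \<in> carrier_vec m" and w: "w \<in> carrier_vec m"
  shows "outer u w *\<^sub>v x = (x \<bullet>c w) \<cdot>\<^sub>v u"
proof (rule eq_vecI)
  fix i assume "i < dim_vec ((x \<bullet>c w) \<cdot>\<^sub>v u)"
  then have i: "i < dim_vec u" by simp
  show "(outer u w *\<^sub>v x) $ i = ((x \<bullet>c w) \<cdot>\<^sub>v u) $ i"
    using i x w unfolding outer_def
    by (simp add: scalar_prod_def sum_distrib_left mult_ac conjugate_complex_def)
qed (simp add: outer_def)

lemma adj_outer: "mat_adjoint (outer u w) = outer w u"
  by (rule eq_matI) (auto simp: outer_def)

lemma mult_unit_col: assumes Y: "(Y::complex mat) \<in> carrier_mat n m" and j: "j < m"
  shows "Y *\<^sub>v unit_vec m j = col Y j"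
  by (rule eq_vecI) (use Y j in auto)

definition proj_inv :: "complex mat \<Rightarrow> complex mat \<Rightarrow> complex mat \<Rightarrow> nat \<Rightarrow> bool" where
  "proj_inv Y Q T j \<longleftrightarrow> Q \<in> carrier_mat (dim_row Y) (dim_row Y) \<and> T \<in> carrier_mat (dim_col Y) (dim_row Y) \<and>
     mat_adjoint Q = Q \<and> Q * Q = Q \<and> Y * T = Q \<and> (\<forall>i<j. Q *\<^sub>v col Y i = col Y i)"

lemma proj_inv_0: "proj_inv Y (0\<^sub>m (dim_row Y) (dim_row Y)) (0\<^sub>m (dim_col Y) (dim_row Y)) 0"
  unfolding proj_inv_def by auto

lemma apply_Q': assumes Q: "Q \<in> carrier_mat n n" and c': "c' \<in> carrier_vec n" and x: "x \<in> carrier_vec n"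
  shows "(Q + s \<cdot>\<^sub>m outer c' c') *\<^sub>v x = Q *\<^sub>v x + (s * (x \<bullet>c c')) \<cdot>\<^sub>v c'"
proof -
  have O: "outer c' c' \<in> carrier_mat n n" using c' by simp
  have "(Q + s \<cdot>\<^sub>m outer c' c') *\<^sub>v x = Q *\<^sub>v x + (s \<cdot>\<^sub>m outer c' c') *\<^sub>v x"
    by (rule add_mult_distrib_mat_vec[OF Q _ x]) (use O in simp)
  also have "(s \<cdot>\<^sub>m outer c' c') *\<^sub>v x = s \<cdot>\<^sub>v (outer c' c' *\<^sub>v x)"
    by (rule smult_mat_vec) (use O x in simp)
  also have "outer c' c' *\<^sub>v x = (x \<bullet>c c') \<cdot>\<^sub>v c'" by (rule outer_mult_vec[OF x c'])
  finally show ?thesis by (simp add: smult_smult_assoc)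
qed

lemma proj_step: assumes inv: "proj_inv Y Q T j" and j: "j < dim_col Y"
  shows "\<exists>Q' T'. proj_inv Y Q' T' (Suc j)"
proof -
  define n where "n = dim_row Y"
  define m where "m = dim_col Y"
  have Y: "Y \<in> carrier_mat n m" unfolding n_def m_def by simp
  have dY: "dim_row Y = n" "dim_col Y = m" unfolding n_def m_def by simp_all
  have jm: "j < m" using j unfolding m_def .
  have Q: "Q \<in> carrier_mat n n" and T: "T \<in> carrier_mat m n" and hQ: "mat_adjoint Q = Q"
    and QQ: "Q * Q = Q" and YT: "Y * T = Q" and cols: "\<And>i. i < j \<Longrightarrow> Q *\<^sub>v col Y i = col Y i"
    using inv unfolding proj_inv_def n_def m_def by auto
  define c where "c = col Y j"
  have c: "c \<in> carrier_vec n" unfolding c_def using dY by (intro carrier_vecI) simp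
  define c' where "c' = c - Q *\<^sub>v c"
  have Qc: "Q *\<^sub>v c \<in> carrier_vec n" using Q c by simp
  have c': "c' \<in> carrier_vec n" unfolding c'_def using c Qc by simp
  have QQc: "Q *\<^sub>v (Q *\<^sub>v c) = Q *\<^sub>v c" using assoc_mult_mat_vec[OF Q Q c] QQ by simp
  have Qc'0: "Q *\<^sub>v c' = 0\<^sub>v n"
  proof -
    have "Q *\<^sub>v c' = Q *\<^sub>v c - Q *\<^sub>v (Q *\<^sub>v c)" unfolding c'_def by (rule mult_minus_distrib_mat_vec[OF Q c Qc])
    then show ?thesis using QQc Qc by simp
  qed
  have orth: "(Q *\<^sub>v x) \<bullet>c c' = 0" if x: "x \<in> carrier_vec n" for x
    using ip_adj[OF Q x c'] hQ Qc'0 ip_zero_right[OF x] by simp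
  have c_split: "c = c' + Q *\<^sub>v c" unfolding c'_def using vec_minus_plus[OF c Qc] by simp
  show ?thesis
  proof (cases "c' = 0\<^sub>v n")
    case True
    have "Q *\<^sub>v col Y j = col Y j"
    proof -
      have "c = Q *\<^sub>v c" using c_split True Qc by simp
      then show ?thesis unfolding c_def by simp
    qed
    then have "proj_inv Y Q T (Suc j)" using inv cols unfolding proj_inv_def by (auto simp: less_Suc_eq)
    then show ?thesis by blast
  next
    case False
    define r where "r = Re (c' \<bullet>c c')"
    have rpos: "r \<noteq> 0" unfolding r_def using ip_self_zero[of c'] False c' by auto
    have cc'r: "c' \<bullet>c c' = complex_of_real r" unfolding r_def ip_self_real by simp
    define s where "s = complex_of_real (1 / r)"
    have s1: "s * (c' \<bullet>c c') = 1" unfolding s_def cc'r using rpos by simp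
    define Q' where "Q' = Q + s \<cdot>\<^sub>m outer c' c'"
    define d where "d = unit_vec m j - T *\<^sub>v c"
    have d: "d \<in> carrier_vec m" unfolding d_def using T c by simp
    define T' where "T' = T + s \<cdot>\<^sub>m outer d c'"
    have O: "outer c' c' \<in> carrier_mat n n" using c' by simp
    have Od: "outer d c' \<in> carrier_mat m n" using c' d by simp
    have Q': "Q' \<in> carrier_mat n n" unfolding Q'_def using Q O by simp
    have T': "T' \<in> carrier_mat m n" unfolding T'_def using T Od by simp
    have app: "Q' *\<^sub>v x = Q *\<^sub>v x + (s * (x \<bullet>c c')) \<cdot>\<^sub>v c'" if x: "x \<in> carrier_vec n" for x
      unfolding Q'_def by (rule apply_Q'[OF Q c' x])
    have hQ': "mat_adjoint Q' = Q'"
    proof -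
      have "mat_adjoint Q' = mat_adjoint Q + mat_adjoint (s \<cdot>\<^sub>m outer c' c')"
        unfolding Q'_def by (rule adj_add[of _ n n]) (use Q O in auto)
      also have "mat_adjoint (s \<cdot>\<^sub>m outer c' c') = s \<cdot>\<^sub>m outer c' c'"
        unfolding adj_smult adj_outer s_def by simp
      finally show ?thesis using hQ unfolding Q'_def by simp
    qed
    have Q'c': "Q' *\<^sub>v c' = c'"
      using app[OF c'] Qc'0 s1 c' by simp
    have Q'Q': "Q' * Q' = Q'"
    proof (rule mat_eq_by_vec[of _ n n])
      show "Q' * Q' \<in> carrier_mat n n" using Q' by simp
      show "Q' \<in> carrier_mat n n" by (rule Q')
      fix x :: "complex vec" assume x: "x \<in> carrier_vec n"
      define a where "a = s * (x \<bullet>c c')"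
      have Qx: "Q *\<^sub>v x \<in> carrier_vec n" using Q x by simp
      have ac': "a \<cdot>\<^sub>v c' \<in> carrier_vec n" using c' by simp
      have "(Q' * Q') *\<^sub>v x = Q' *\<^sub>v (Q' *\<^sub>v x)" by (rule assoc_mult_mat_vec[OF Q' Q' x])
      also have "Q' *\<^sub>v x = Q *\<^sub>v x + a \<cdot>\<^sub>v c'" unfolding a_def by (rule app[OF x])
      also have "Q' *\<^sub>v (Q *\<^sub>v x + a \<cdot>\<^sub>v c') = Q' *\<^sub>v (Q *\<^sub>v x) + Q' *\<^sub>v (a \<cdot>\<^sub>v c')"
        by (rule mult_add_distrib_mat_vec[OF Q' Qx ac'])
      also have "Q' *\<^sub>v (Q *\<^sub>v x) = Q *\<^sub>v x"
        using app[OF Qx] orth[OF x] assoc_mult_mat_vec[OF Q Q x] QQ c' vec_plus_0smult[OF Qx c'] by simp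
      also have "Q' *\<^sub>v (a \<cdot>\<^sub>v c') = a \<cdot>\<^sub>v c'" using mult_mat_vec[OF Q' c'] Q'c' by simp
      finally show "(Q' * Q') *\<^sub>v x = Q' *\<^sub>v x" using app[OF x] unfolding a_def by simp
    qed
    have YT': "Y * T' = Q'"
    proof -
      have "Y * T' = Y * T + Y * (s \<cdot>\<^sub>m outer d c')"
        unfolding T'_def by (rule mult_add_distrib_mat[OF Y T]) (use Od in simp)
      also have "Y * (s \<cdot>\<^sub>m outer d c') = s \<cdot>\<^sub>m (Y * outer d c')" by (rule mult_smult_distrib[OF Y Od])
      also have "Y * outer d c' = outer (Y *\<^sub>v d) c'" by (rule outer_mult_left[OF Y d])
      also have "Y *\<^sub>v d = c'"
      proof -
        have u: "unit_vec m j \<in> carrier_vec m" by simp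
        have Tc: "T *\<^sub>v c \<in> carrier_vec m" using T c by simp
        have "Y *\<^sub>v d = Y *\<^sub>v unit_vec m j - Y *\<^sub>v (T *\<^sub>v c)"
          unfolding d_def by (rule mult_minus_distrib_mat_vec[OF Y u Tc])
        also have "Y *\<^sub>v unit_vec m j = c" unfolding c_def by (rule mult_unit_col[OF Y jm])
        also have "Y *\<^sub>v (T *\<^sub>v c) = Q *\<^sub>v c" using assoc_mult_mat_vec[OF Y T c] YT by simp
        finally show ?thesis unfolding c'_def .
      qed
      finally show ?thesis using YT unfolding Q'_def by simp
    qed
    have cols': "Q' *\<^sub>v col Y i = col Y i" if i: "i < Suc j" for i
    proof (cases "i < j")
      case True
      have x: "col Y i \<in> carrier_vec n" using dY by (intro carrier_vecI) simp
      have "(col Y i) \<bullet>c c' = 0" using orth[OF x] cols[OF True] by simp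
      then show ?thesis using app[OF x] x vec_plus_0smult[OF _ c', of "Q *\<^sub>v col Y i"] cols[OF True] by simp
    next
      case False
      then have ij: "i = j" using i by simp
      have "c \<bullet>c c' = c' \<bullet>c c'"
      proof -
        have "c \<bullet>c c' = (c' + Q *\<^sub>v c) \<bullet>c c'" using c_split by simp
        also have "\<dots> = c' \<bullet>c c' + (Q *\<^sub>v c) \<bullet>c c'" by (rule ip_add_left[OF c' Qc c'])
        finally show ?thesis using orth[OF c] by simp
      qed
      then have "Q' *\<^sub>v c = Q *\<^sub>v c + c'" using app[OF c] s1 c' by simp
      also have "\<dots> = c" using c_split c' Qc by (simp add: comm_add_vec)
      finally show ?thesis unfolding ij c_def .
    qed
    have "proj_inv Y Q' T' (Suc j)"
      unfolding proj_inv_def dY using Q' T' hQ' Q'Q' YT' cols' by auto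
    then show ?thesis by blast
  qed
qed

lemma proj_exists: "\<exists>Q T. proj_inv Y Q T j" if "j \<le> dim_col Y"
  using that
proof (induction j)
  case 0 then show ?case using proj_inv_0 by blast
next
  case (Suc j) then show ?case using proj_step by (meson Suc_leD Suc_le_lessD)
qed

lemma proj_final: assumes Y: "(Y::complex mat) \<in> carrier_mat n m"
  shows "\<exists>Q T. Q \<in> carrier_mat n n \<and> T \<in> carrier_mat m n \<and> mat_adjoint Q = Q \<and> Q * Q = Q \<and> Y * T = Q \<and> Q * Y = Y"
proof -
  obtain Q T where inv: "proj_inv Y Q T m" using proj_exists[of m Y] Y by auto
  have Q: "Q \<in> carrier_mat n n" and T: "T \<in> carrier_mat m n" and cols: "\<And>i. i < m \<Longrightarrow> Q *\<^sub>v col Y i = col Y i"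
    using inv Y unfolding proj_inv_def by auto
  have "Q * Y = Y"
  proof (rule eq_matI)
    fix i j assume i: "i < dim_row Y" and j: "j < dim_col Y"
    have "(Q * Y) $$ (i,j) = (Q *\<^sub>v col Y j) $ i" using Q Y i j by simp
    also have "\<dots> = col Y j $ i" using cols j Y by simp
    finally show "(Q * Y) $$ (i,j) = Y $$ (i,j)" using i j by simp
  qed (use Q Y in auto)
  then show ?thesis using inv Y Q T unfolding proj_inv_def by auto
qed

definition penrose :: "complex mat \<Rightarrow> complex mat \<Rightarrow> bool" where
  "penrose M X \<longleftrightarrow> X \<in> carrier_mat (dim_col M) (dim_row M) \<and>
     M * X * M = M \<and> X * M * X = X \<and>
     mat_adjoint (M * X) = M * X \<and> mat_adjoint (X * M) = X * M"

lemma pinv_eq: "pinv M = (THE X. penrose M X)"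
  unfolding pinv_def penrose_def by simp

lemma mp_exists: assumes Y: "(Y::complex mat) \<in> carrier_mat n n" and hY: "mat_adjoint Y = Y"
  shows "\<exists>X. penrose Y X"
proof -
  obtain Q T where Q: "Q \<in> carrier_mat n n" and T: "T \<in> carrier_mat n n" and hQ: "mat_adjoint Q = Q"
    and QQ: "Q * Q = Q" and YT: "Y * T = Q" and QY: "Q * Y = Y"
    using proj_final[OF Y] by blast
  have Ta: "mat_adjoint T \<in> carrier_mat n n" using T by simp
  have YQ: "Y * Q = Y"
  proof -
    have "mat_adjoint (Q * Y) = mat_adjoint Y * mat_adjoint Q" by (rule adj_mult[OF Q Y])
    then show ?thesis using QY hY hQ by simp
  qed
  have TY: "mat_adjoint T * Y = Q"
  proof -
    have "mat_adjoint (Y * T) = mat_adjoint T * mat_adjoint Y" by (rule adj_mult[OF Y T])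
    then show ?thesis using YT hY hQ by simp
  qed
  define X where "X = Q * T"
  have X: "X \<in> carrier_mat n n" unfolding X_def using Q T by simp
  have X2: "X = mat_adjoint T * Q"
  proof -
    have "mat_adjoint T * Q = mat_adjoint T * (Y * T)" using YT by simp
    also have "\<dots> = (mat_adjoint T * Y) * T" using assoc_mult_mat[OF Ta Y T] by simp
    finally show ?thesis unfolding X_def using TY by simp
  qed
  have YX: "Y * X = Q" unfolding X_def using assoc_mult_mat[OF Y Q T] YQ YT by simp
  have XY: "X * Y = Q" unfolding X2 using assoc_mult_mat[OF Ta Q Y] QY TY by simp
  have "Y * X * Y = Y" using YX QY by simp
  moreover have "X * Y * X = X" using XY assoc_mult_mat[OF Q Q T] QQ unfolding X_def by simp
  moreover have "mat_adjoint (Y * X) = Y * X" using YX hQ by simp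
  moreover have "mat_adjoint (X * Y) = X * Y" using XY hQ by simp
  ultimately have "penrose Y X" unfolding penrose_def using X Y by simp
  then show ?thesis by blast
qed

lemma mp_unique: assumes Y: "(Y::complex mat) \<in> carrier_mat n n"
  and p1: "penrose Y X1" and p2: "penrose Y X2"
  shows "X1 = X2"
proof -
  have X1: "X1 \<in> carrier_mat n n" and a1: "Y * X1 * Y = Y" and b1: "X1 * Y * X1 = X1"
    and c1: "mat_adjoint (Y * X1) = Y * X1" and d1: "mat_adjoint (X1 * Y) = X1 * Y"
    using p1 Y unfolding penrose_def by auto
  have X2: "X2 \<in> carrier_mat n n" and a2: "Y * X2 * Y = Y" and b2: "X2 * Y * X2 = X2"
    and c2: "mat_adjoint (Y * X2) = Y * X2" and d2: "mat_adjoint (X2 * Y) = X2 * Y"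
    using p2 Y unfolding penrose_def by auto
  have YX1: "Y * X1 \<in> carrier_mat n n" and YX2: "Y * X2 \<in> carrier_mat n n"
    and X1Y: "X1 * Y \<in> carrier_mat n n" and X2Y: "X2 * Y \<in> carrier_mat n n" using X1 X2 Y by auto
  have E1: "Y * X1 = (Y * X2) * (Y * X1)"
  proof -
    have "Y * X1 = (Y * X2 * Y) * X1" using a2 by simp
    also have "\<dots> = (Y * X2) * (Y * X1)" using assoc_mult_mat[OF YX2 Y X1] by simp
    finally show ?thesis .
  qed
  have E2: "Y * X2 = (Y * X1) * (Y * X2)"
  proof -
    have "Y * X2 = (Y * X1 * Y) * X2" using a1 by simp
    also have "\<dots> = (Y * X1) * (Y * X2)" using assoc_mult_mat[OF YX1 Y X2] by simp
    finally show ?thesis .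
  qed
  have E: "Y * X1 = Y * X2"
  proof -
    have "Y * X1 = mat_adjoint (Y * X1)" using c1 by simp
    also have "\<dots> = mat_adjoint ((Y * X2) * (Y * X1))" using E1 by simp
    also have "\<dots> = mat_adjoint (Y * X1) * mat_adjoint (Y * X2)" by (rule adj_mult[OF YX2 YX1])
    also have "\<dots> = Y * X2" using c1 c2 E2 by simp
    finally show ?thesis .
  qed
  have F1: "X1 * Y = (X1 * Y) * (X2 * Y)"
  proof -
    have "X1 * Y = X1 * (Y * X2 * Y)" using a2 by simp
    also have "\<dots> = (X1 * Y) * (X2 * Y)" using assoc_mult_mat[OF X1 Y X2Y] assoc_mult_mat[OF Y X2 Y] by simp
    finally show ?thesis .
  qed
  have F2: "X2 * Y = (X2 * Y) * (X1 * Y)"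
  proof -
    have "X2 * Y = X2 * (Y * X1 * Y)" using a1 by simp
    also have "\<dots> = (X2 * Y) * (X1 * Y)" using assoc_mult_mat[OF X2 Y X1Y] assoc_mult_mat[OF Y X1 Y] by simp
    finally show ?thesis .
  qed
  have F: "X1 * Y = X2 * Y"
  proof -
    have "X1 * Y = mat_adjoint (X1 * Y)" using d1 by simp
    also have "\<dots> = mat_adjoint ((X1 * Y) * (X2 * Y))" using F1 by simp
    also have "\<dots> = mat_adjoint (X2 * Y) * mat_adjoint (X1 * Y)" by (rule adj_mult[OF X1Y X2Y])
    also have "\<dots> = X2 * Y" using d1 d2 F2 by simp
    finally show ?thesis .
  qed
  have "X1 = (X1 * Y) * X1" using b1 by simp
  also have "\<dots> = (X2 * Y) * X1" using F by simp
  also have "\<dots> = X2 * (Y * X1)" using assoc_mult_mat[OF X2 Y X1] by simp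
  also have "\<dots> = X2 * (Y * X2)" using E by simp
  also have "\<dots> = X2" using assoc_mult_mat[OF X2 Y X2] b2 by simp
  finally show ?thesis .
qed

lemma pinv_props: assumes Y: "(Y::complex mat) \<in> carrier_mat n n" and hY: "mat_adjoint Y = Y"
  shows "pinv Y \<in> carrier_mat n n" "Y * pinv Y * Y = Y" "pinv Y * Y * pinv Y = pinv Y"
    "mat_adjoint (pinv Y) = pinv Y"
proof -
  have ex1: "\<exists>!X. penrose Y X" using mp_exists[OF Y hY] mp_unique[OF Y] by blast
  have p: "penrose Y (pinv Y)" unfolding pinv_eq by (rule theI'[OF ex1])
  then show X: "pinv Y \<in> carrier_mat n n" "Y * pinv Y * Y = Y" "pinv Y * Y * pinv Y = pinv Y"
    unfolding penrose_def using Y by auto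
  let ?X = "pinv Y"
  have c: "mat_adjoint (Y * ?X) = Y * ?X" and d: "mat_adjoint (?X * Y) = ?X * Y" using p unfolding penrose_def by auto
  have Xa: "mat_adjoint ?X \<in> carrier_mat n n" using X(1) by simp
  have YXa: "Y * mat_adjoint ?X = ?X * Y"
    using adj_mult[OF X(1) Y] hY d by simp
  have XaY: "mat_adjoint ?X * Y = Y * ?X"
    using adj_mult[OF Y X(1)] hY c by simp
  have "penrose Y (mat_adjoint ?X)"
  proof -
    have "Y * mat_adjoint ?X * Y = Y"
    proof -
      have "mat_adjoint (Y * ?X * Y) = mat_adjoint Y * mat_adjoint (Y * ?X)"
        by (rule adj_mult[of _ n n]) (use Y X in auto)
      then have "Y = Y * (mat_adjoint ?X * Y)" using X(2) hY adj_mult[OF Y X(1)] by simp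
      then show ?thesis using assoc_mult_mat[OF Y Xa Y] by simp
    qed
    moreover have "mat_adjoint ?X * Y * mat_adjoint ?X = mat_adjoint ?X"
    proof -
      have "mat_adjoint (?X * Y * ?X) = mat_adjoint ?X * mat_adjoint (?X * Y)"
        by (rule adj_mult[of _ n n]) (use Y X in auto)
      then have "mat_adjoint ?X = mat_adjoint ?X * (Y * mat_adjoint ?X)" using X(3) hY adj_mult[OF X(1) Y] by simp
      then show ?thesis using assoc_mult_mat[OF Xa Y Xa] by simp
    qed
    moreover have "mat_adjoint (Y * mat_adjoint ?X) = Y * mat_adjoint ?X" using YXa d by simp
    moreover have "mat_adjoint (mat_adjoint ?X * Y) = mat_adjoint ?X * Y" using XaY c by simp
    ultimately show ?thesis unfolding penrose_def using Xa Y by simp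
  qed
  then show "mat_adjoint (pinv Y) = pinv Y" using mp_unique[OF Y _ p] by blast
qed

lemma det1: assumes "(A :: 'a :: comm_ring_1 mat) \<in> carrier_mat 1 1" shows "det A = A $$ (0,0)"
proof -
  have "det A = (\<Sum>i<1. A $$ (i,0) * cofactor A i 0)" by (rule laplace_expansion_column[OF assms]) simp
  also have "\<dots> = A $$ (0,0) * cofactor A 0 0" by simp
  also have "cofactor A 0 0 = 1" unfolding cofactor_def
    by (subst det_dim_zero) (use assms in \<open>auto simp: mat_delete_def\<close>)
  finally show ?thesis by simp
qed

lemma det2: assumes A: "(A :: 'a :: comm_ring_1 mat) \<in> carrier_mat 2 2"
  shows "det A = A $$ (0,0) * A $$ (1,1) - A $$ (0,1) * A $$ (1,0)"
proof -
  have "det A = (\<Sum>i<2. A $$ (i,0) * cofactor A i 0)" by (rule laplace_expansion_column[OF A]) simp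
  also have "\<dots> = A $$ (0,0) * cofactor A 0 0 + A $$ (1,0) * cofactor A 1 0" by (simp add: numeral_2_eq_2)
  also have "cofactor A 0 0 = A $$ (1,1)" unfolding cofactor_def
    by (subst det1) (use A in \<open>auto simp: mat_delete_def delete_index_def insert_index_def\<close>)
  also have "cofactor A 1 0 = - A $$ (0,1)" unfolding cofactor_def
    by (subst det1) (use A in \<open>auto simp: mat_delete_def delete_index_def insert_index_def\<close>)
  finally show ?thesis by (simp add: algebra_simps)
qed

lemma sum2: "(\<Sum>i = 0..<(2::nat). f i) = f 0 + (f 1 :: 'a :: comm_monoid_add)"
  by (simp add: numeral_2_eq_2)

lemma qf2: assumes H: "(H::complex mat) \<in> carrier_mat 2 2" and v: "v \<in> carrier_vec 2"
  shows "(H *\<^sub>v v) \<bullet>c v = H $$ (0,0) * v $ 0 * cnj (v $ 0) + H $$ (0,1) * v $ 1 * cnj (v $ 0)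
     + H $$ (1,0) * v $ 0 * cnj (v $ 1) + H $$ (1,1) * v $ 1 * cnj (v $ 1)"
  using H v by (simp add: scalar_prod_def sum2 algebra_simps)

lemma real_amgm2: fixes a d B p q :: real
  assumes "0 \<le> a" "0 \<le> d" "0 \<le> B" "B\<^sup>2 \<le> a * d" "0 \<le> p" "0 \<le> q"
  shows "2 * B * p * q \<le> a * p\<^sup>2 + d * q\<^sup>2"
proof -
  have "(2 * B * p * q)\<^sup>2 = 4 * B\<^sup>2 * (p\<^sup>2 * q\<^sup>2)" by (simp add: power2_eq_square)
  also have "\<dots> \<le> 4 * (a * d) * (p\<^sup>2 * q\<^sup>2)" using assms by (simp add: mult_right_mono)
  also have "\<dots> \<le> (a * p\<^sup>2 + d * q\<^sup>2)\<^sup>2"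
  proof -
    have "(a * p\<^sup>2 + d * q\<^sup>2)\<^sup>2 - 4 * (a * d) * (p\<^sup>2 * q\<^sup>2) = (a * p\<^sup>2 - d * q\<^sup>2)\<^sup>2"
      by (simp add: power2_eq_square algebra_simps)
    then show ?thesis by (smt (verit) zero_le_power2)
  qed
  finally have sq: "(2 * B * p * q)\<^sup>2 \<le> (a * p\<^sup>2 + d * q\<^sup>2)\<^sup>2" .
  have nn: "0 \<le> a * p\<^sup>2 + d * q\<^sup>2" using assms by simp
  show ?thesis by (rule power2_le_imp_le[OF sq nn])
qed

lemma real_nec2: fixes a d B :: real
  assumes a: "0 \<le> a" and B: "0 \<le> B" and h: "\<And>t. 0 \<le> t \<Longrightarrow> 0 \<le> a * t\<^sup>2 * B + d - 2 * t * B"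
  shows "B \<le> a * d"
proof (cases "a = 0")
  case True
  show ?thesis
  proof (rule ccontr)
    assume "\<not> B \<le> a * d" then have Bp: "0 < B" using True by simp
    have "0 \<le> d" using h[of 0] by simp
    define t where "t = (d + 1) / (2 * B)"
    have "0 \<le> t" unfolding t_def using Bp \<open>0 \<le> d\<close> by simp
    have "2 * t * B = d + 1" unfolding t_def using Bp by simp
    then show False using h[OF \<open>0 \<le> t\<close>] True by simp
  qed
next
  case False
  then have ap: "0 < a" using a by simp
  have "0 \<le> a * (1/a)\<^sup>2 * B + d - 2 * (1/a) * B" using h[of "1/a"] ap by simp
  also have "a * (1/a)\<^sup>2 * B + d - 2 * (1/a) * B = d - B / a" using ap by (simp add: power2_eq_square field_simps)
  finally show ?thesis using ap by (simp add: field_simps)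
qed

lemma herm2: assumes H: "(H::complex mat) \<in> carrier_mat 2 2" and hH: "mat_adjoint H = H"
  shows "H $$ (1,0) = cnj (H $$ (0,1))" "Im (H $$ (0,0)) = 0" "Im (H $$ (1,1)) = 0"
proof -
  have e: "\<And>i j. i < 2 \<Longrightarrow> j < 2 \<Longrightarrow> cnj (H $$ (j,i)) = H $$ (i,j)"
    using H hH by (metis adj_index carrier_matD(1) carrier_matD(2))
  show "H $$ (1,0) = cnj (H $$ (0,1))" using e[of 1 0] by simp
  show "Im (H $$ (0,0)) = 0" using e[of 0 0] by (simp add: complex_eq_iff)
  show "Im (H $$ (1,1)) = 0" using e[of 1 1] by (simp add: complex_eq_iff)
qed

lemma re_qf2: assumes H: "(H::complex mat) \<in> carrier_mat 2 2" and hH: "mat_adjoint H = H" and v: "v \<in> carrier_vec 2"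
  shows "Re ((H *\<^sub>v v) \<bullet>c v) = Re (H $$ (0,0)) * (cmod (v $ 0))\<^sup>2 + Re (H $$ (1,1)) * (cmod (v $ 1))\<^sup>2
     + 2 * Re (H $$ (0,1) * v $ 1 * cnj (v $ 0))"
proof -
  note h = herm2[OF H hH]
  have a: "H $$ (0,0) = complex_of_real (Re (H $$ (0,0)))" using h(2) by (simp add: complex_eq_iff)
  have d: "H $$ (1,1) = complex_of_real (Re (H $$ (1,1)))" using h(3) by (simp add: complex_eq_iff)
  have n0: "v $ 0 * cnj (v $ 0) = complex_of_real ((cmod (v $ 0))\<^sup>2)" by (simp only: complex_norm_square)
  have n1: "v $ 1 * cnj (v $ 1) = complex_of_real ((cmod (v $ 1))\<^sup>2)" by (simp only: complex_norm_square)
  have c: "H $$ (1,0) * v $ 0 * cnj (v $ 1) = cnj (H $$ (0,1) * v $ 1 * cnj (v $ 0))" using h(1) by simp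
  have "(H *\<^sub>v v) \<bullet>c v = H $$ (0,0) * (v $ 0 * cnj (v $ 0)) + H $$ (0,1) * v $ 1 * cnj (v $ 0)
     + H $$ (1,0) * v $ 0 * cnj (v $ 1) + H $$ (1,1) * (v $ 1 * cnj (v $ 1))"
    using qf2[OF H v] by (simp add: mult.assoc)
  also have "\<dots> = complex_of_real (Re (H $$ (0,0)) * (cmod (v $ 0))\<^sup>2) + H $$ (0,1) * v $ 1 * cnj (v $ 0)
     + cnj (H $$ (0,1) * v $ 1 * cnj (v $ 0)) + complex_of_real (Re (H $$ (1,1)) * (cmod (v $ 1))\<^sup>2)"
    by (subst a, subst d, subst n0, subst n1, subst c) simp
  finally show ?thesis by (simp add: algebra_simps)
qed

lemma psd2_suff: assumes H: "(H::complex mat) \<in> carrier_mat 2 2" and hH: "mat_adjoint H = H"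
  and a: "0 \<le> Re (H $$ (0,0))" and d: "0 \<le> Re (H $$ (1,1))"
  and b: "(cmod (H $$ (0,1)))\<^sup>2 \<le> Re (H $$ (0,0)) * Re (H $$ (1,1))"
  shows "psd H"
proof (rule psdI[OF H hH])
  fix v :: "complex vec" assume v: "v \<in> carrier_vec 2"
  let ?w = "H $$ (0,1) * v $ 1 * cnj (v $ 0)"
  have "cmod ?w = cmod (H $$ (0,1)) * cmod (v $ 1) * cmod (v $ 0)" by (simp add: norm_mult)
  moreover have "- Re ?w \<le> cmod ?w" using abs_Re_le_cmod[of ?w] by simp
  moreover have "2 * cmod (H $$ (0,1)) * cmod (v $ 0) * cmod (v $ 1) \<le>
      Re (H $$ (0,0)) * (cmod (v $ 0))\<^sup>2 + Re (H $$ (1,1)) * (cmod (v $ 1))\<^sup>2"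
    by (rule real_amgm2) (use a d b in auto)
  ultimately show "0 \<le> Re ((H *\<^sub>v v) \<bullet>c v)" unfolding re_qf2[OF H hH v] by (simp add: mult_ac)
qed

lemma psd2_nec: assumes P: "psd H" and H: "(H::complex mat) \<in> carrier_mat 2 2"
  shows "0 \<le> Re (H $$ (0,0))" "0 \<le> Re (H $$ (1,1))"
    "(cmod (H $$ (0,1)))\<^sup>2 \<le> Re (H $$ (0,0)) * Re (H $$ (1,1))"
proof -
  have hH: "mat_adjoint H = H" using psdD(2)[OF P] .
  have dH: "dim_row H = 2" using H by simp
  have pos: "0 \<le> Re ((H *\<^sub>v v) \<bullet>c v)" if "v \<in> carrier_vec 2" for v
    using psdD(3)[OF P] that dH by simp
  define e0 where "e0 = vec 2 (\<lambda>i. if i = 0 then 1 else (0::complex))"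
  define e1 where "e1 = vec 2 (\<lambda>i. if i = 0 then 0 else (1::complex))"
  show a: "0 \<le> Re (H $$ (0,0))" using pos[of e0] re_qf2[OF H hH, of e0] unfolding e0_def by simp
  show d: "0 \<le> Re (H $$ (1,1))" using pos[of e1] re_qf2[OF H hH, of e1] unfolding e1_def by simp
  let ?b = "H $$ (0,1)"
  show "(cmod ?b)\<^sup>2 \<le> Re (H $$ (0,0)) * Re (H $$ (1,1))"
  proof (rule real_nec2[OF a])
    show "0 \<le> (cmod ?b)\<^sup>2" by simp
    fix t :: real assume t: "0 \<le> t"
    define v where "v = vec 2 (\<lambda>i. if i = 0 then - complex_of_real t * ?b else (1::complex))"
    have v: "v \<in> carrier_vec 2" unfolding v_def by simp
    have "Re (?b * v $ 1 * cnj (v $ 0)) = - t * (cmod ?b)\<^sup>2"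
      unfolding v_def cmod_power2 by (simp add: power2_eq_square algebra_simps)
    moreover have "(cmod (v $ 0))\<^sup>2 = t\<^sup>2 * (cmod ?b)\<^sup>2" unfolding v_def using t
      by (simp add: norm_mult power_mult_distrib)
    moreover have "(cmod (v $ 1))\<^sup>2 = 1" unfolding v_def by simp
    ultimately show "0 \<le> Re (H $$ (0,0)) * t\<^sup>2 * (cmod ?b)\<^sup>2 + Re (H $$ (1,1)) - 2 * t * (cmod ?b)\<^sup>2"
      using pos[OF v] re_qf2[OF H hH v] by (simp add: mult_ac)
  qed
qed

lemma Jmodes_dims[simp]: "dim_row (Jmodes n S) = 2 * n" "dim_col (Jmodes n S) = 2 * n"
  by (simp_all add: Jmodes_def)

lemma Jmodes_carrier[simp]: "Jmodes n S \<in> carrier_mat (2*n) (2*n)"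
  by (simp add: Jmodes_def)

lemma Jmodes_real: "i < 2*n \<Longrightarrow> j < 2*n \<Longrightarrow> cnj (Jmodes n S $$ (i,j)) = Jmodes n S $$ (i,j)"
  by (simp add: Jmodes_def)

lemma mod2_cases: "(i::nat) mod 2 = 0 \<or> i mod 2 = 1" by auto

lemma Jmodes_antisym: "i < 2*n \<Longrightarrow> j < 2*n \<Longrightarrow> Jmodes n S $$ (j,i) = - Jmodes n S $$ (i,j)"
  using mod2_cases[of i] mod2_cases[of j] by (auto simp: Jmodes_def)

lemma adj_iJ: "mat_adjoint (\<i> \<cdot>\<^sub>m Jmodes n S) = \<i> \<cdot>\<^sub>m Jmodes n S"
proof (rule eq_matI)
  fix i j assume "i < dim_row (\<i> \<cdot>\<^sub>m Jmodes n S)" "j < dim_col (\<i> \<cdot>\<^sub>m Jmodes n S)"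
  then have i: "i < 2*n" and j: "j < 2*n" by auto
  have "mat_adjoint (\<i> \<cdot>\<^sub>m Jmodes n S) $$ (i,j) = cnj (\<i> * Jmodes n S $$ (j,i))" using i j by simp
  also have "\<dots> = - \<i> * cnj (Jmodes n S $$ (j,i))" by simp
  also have "\<dots> = \<i> * Jmodes n S $$ (i,j)" using Jmodes_real[OF j i] Jmodes_antisym[OF i j] by simp
  finally show "mat_adjoint (\<i> \<cdot>\<^sub>m Jmodes n S) $$ (i,j) = (\<i> \<cdot>\<^sub>m Jmodes n S) $$ (i,j)" using i j by simp
qed auto

lemma adj_miJ: "mat_adjoint ((- \<i>) \<cdot>\<^sub>m Jmodes n S) = (- \<i>) \<cdot>\<^sub>m Jmodes n S"
proof (rule eq_matI)
  fix i j assume "i < dim_row ((- \<i>) \<cdot>\<^sub>m Jmodes n S)" "j < dim_col ((- \<i>) \<cdot>\<^sub>m Jmodes n S)"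
  then have i: "i < 2*n" and j: "j < 2*n" by auto
  have "mat_adjoint ((- \<i>) \<cdot>\<^sub>m Jmodes n S) $$ (i,j) = cnj (- \<i> * Jmodes n S $$ (j,i))" using i j by simp
  also have "\<dots> = \<i> * cnj (Jmodes n S $$ (j,i))" by simp
  also have "\<dots> = - \<i> * Jmodes n S $$ (i,j)" using Jmodes_real[OF j i] Jmodes_antisym[OF i j] by simp
  finally show "mat_adjoint ((- \<i>) \<cdot>\<^sub>m Jmodes n S) $$ (i,j) = ((- \<i>) \<cdot>\<^sub>m Jmodes n S) $$ (i,j)" using i j by simp
qed auto

abbreviation jj :: "complex mat" where "jj \<equiv> Jmodes 1 {}"

lemma jj_entries: "jj $$ (0,0) = 0" "jj $$ (0,1) = -1" "jj $$ (1,0) = 1" "jj $$ (1,1) = 0"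
  by (simp_all add: Jmodes_def)

definition m2 :: "real \<Rightarrow> real \<Rightarrow> real \<Rightarrow> real mat" where
  "m2 p q r = mat 2 2 (\<lambda>(i,j). if i = 0 then (if j = 0 then p else q) else (if j = 0 then q else r))"

lemma m2_carrier[simp]: "m2 p q r \<in> carrier_mat 2 2" by (simp add: m2_def)
lemma m2_dims[simp]: "dim_row (m2 p q r) = 2" "dim_col (m2 p q r) = 2" by (simp_all add: m2_def)
lemma m2_entries: "m2 p q r $$ (0,0) = p" "m2 p q r $$ (0,1) = q" "m2 p q r $$ (1,0) = q" "m2 p q r $$ (1,1) = r"
  by (simp_all add: m2_def)

lemma m2_transpose: "transpose_mat (m2 p q r) = m2 p q r"
  by (rule eq_matI) (auto simp: m2_def)

lemma m2_det: "det (m2 p q r) = p * r - q * q"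
  by (subst det2) (simp_all add: m2_def)

lemma vec2_nonzero: assumes z: "(z::real vec) \<in> carrier_vec 2" and nz: "z \<noteq> 0\<^sub>v 2"
  shows "z $ 0 \<noteq> 0 \<or> z $ 1 \<noteq> 0"
proof (rule ccontr)
  assume "\<not> (z $ 0 \<noteq> 0 \<or> z $ 1 \<noteq> 0)"
  then have "z = 0\<^sub>v 2" using z by (intro eq_vecI) (auto simp: less_2_cases_iff)
  then show False using nz by simp
qed

lemma m2_pd: assumes p: "0 < p" and D: "0 < p * r - q * q"
  shows "real_pd (m2 p q r)"
  unfolding real_pd_def
proof (intro conjI ballI impI)
  show "m2 p q r \<in> carrier_mat (dim_row (m2 p q r)) (dim_row (m2 p q r))" by simp
  fix z :: "real vec" assume z: "z \<in> carrier_vec (dim_row (m2 p q r))" and nz: "z \<noteq> 0\<^sub>v (dim_row (m2 p q r))"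
  have z2: "z \<in> carrier_vec 2" using z by simp
  have e: "z \<bullet> (m2 p q r *\<^sub>v z) = p * (z $ 0)\<^sup>2 + 2 * q * (z $ 0) * (z $ 1) + r * (z $ 1)\<^sup>2"
    using z2 by (simp add: scalar_prod_def sum2 m2_def power2_eq_square algebra_simps)
  have key: "p * (p * (z $ 0)\<^sup>2 + 2 * q * (z $ 0) * (z $ 1) + r * (z $ 1)\<^sup>2) = (p * z $ 0 + q * z $ 1)\<^sup>2 + (p * r - q * q) * (z $ 1)\<^sup>2"
    by (simp add: power2_eq_square algebra_simps)
  have "0 < (p * z $ 0 + q * z $ 1)\<^sup>2 + (p * r - q * q) * (z $ 1)\<^sup>2"
  proof (cases "z $ 1 = 0")
    case True
    then have "z $ 0 \<noteq> 0" using vec2_nonzero[OF z2] nz by simp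
    then show ?thesis using True p by simp
  next
    case False
    then have "0 < (p * r - q * q) * (z $ 1)\<^sup>2" using D by simp
    then show ?thesis by (simp add: add_nonneg_pos)
  qed
  then have "0 < p * (p * (z $ 0)\<^sup>2 + 2 * q * (z $ 0) * (z $ 1) + r * (z $ 1)\<^sup>2)" using key by simp
  then show "0 < z \<bullet> (m2 p q r *\<^sub>v z)" unfolding e using p by (simp add: zero_less_mult_iff)
qed

lemma real_core: fixes a d x y :: real
  assumes a: "0 \<le> a" and d: "0 \<le> d" and h1: "x\<^sup>2 + (y + 1)\<^sup>2 \<le> a * d" and h2: "x\<^sup>2 + (y - 1)\<^sup>2 \<le> a * d"
  defines "c \<equiv> 1 / sqrt (a * d - x\<^sup>2)"
  shows "0 < c" "c \<le> 1" "c\<^sup>2 * (a * d - x\<^sup>2) = 1" "y\<^sup>2 \<le> (1 - c)\<^sup>2 * (a * d - x\<^sup>2)" "0 < a" "0 < d"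
proof -
  define D where "D = a * d - x\<^sup>2"
  have D1: "(1 + \<bar>y\<bar>)\<^sup>2 \<le> D"
  proof (cases "0 \<le> y")
    case True then show ?thesis using h1 unfolding D_def by (simp add: power2_eq_square algebra_simps)
  next
    case False then show ?thesis using h2 unfolding D_def by (simp add: power2_eq_square algebra_simps)
  qed
  have Dpos: "0 < D" using D1 by (smt (verit) zero_le_power2 one_le_power abs_ge_zero)
  define s where "s = sqrt D"
  have s2: "s\<^sup>2 = D" unfolding s_def using Dpos by simp
  have sge: "1 + \<bar>y\<bar> \<le> s" unfolding s_def using D1 by (simp add: real_le_rsqrt)
  have spos: "0 < s" using sge by linarith
  have c_eq: "c = 1 / s" unfolding c_def s_def D_def by simp
  show "0 < c" using spos c_eq by simp
  show "c \<le> 1" using sge c_eq by simp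
  have cs: "c * s = 1" using c_eq spos by simp
  have "c\<^sup>2 * D = (c * s)\<^sup>2" using s2 by (simp add: power_mult_distrib)
  then show "c\<^sup>2 * (a * d - x\<^sup>2) = 1" using cs unfolding D_def by simp
  have "(1 - c)\<^sup>2 * D = ((1 - c) * s)\<^sup>2" using s2 by (simp add: power_mult_distrib)
  also have "(1 - c) * s = s - 1" using cs by (simp add: algebra_simps)
  finally have "(1 - c)\<^sup>2 * D = (s - 1)\<^sup>2" .
  moreover have "y\<^sup>2 \<le> (s - 1)\<^sup>2"
  proof -
    have "\<bar>y\<bar> \<le> s - 1" using sge by simp
    then have "\<bar>y\<bar>\<^sup>2 \<le> (s - 1)\<^sup>2" by (rule power_mono) simp
    then show ?thesis by simp
  qed
  ultimately show "y\<^sup>2 \<le> (1 - c)\<^sup>2 * (a * d - x\<^sup>2)" unfolding D_def by simp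
  have "0 < a * d" using Dpos unfolding D_def by (smt (verit) zero_le_power2)
  then show "0 < a" "0 < d" using a d by (auto simp: zero_less_mult_iff)
qed

lemma jj_entries2: "Jmodes (Suc 0) {} $$ (0,0) = 0" "Jmodes (Suc 0) {} $$ (0,Suc 0) = -1"
  "Jmodes (Suc 0) {} $$ (Suc 0,0) = 1" "Jmodes (Suc 0) {} $$ (Suc 0,Suc 0) = 0"
  by (simp_all add: Jmodes_def)

lemma m2_entries2: "m2 p q r $$ (0,Suc 0) = q" "m2 p q r $$ (Suc 0,0) = q" "m2 p q r $$ (Suc 0,Suc 0) = r"
  by (simp_all add: m2_def)

lemma cmod_sq: "(cmod z)\<^sup>2 = (Re z)\<^sup>2 + (Im z)\<^sup>2" by (rule cmod_power2)

lemma cm_extract: assumes K: "(K::complex mat) \<in> carrier_mat 2 2" and hK: "mat_adjoint K = K"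
  and P1: "psd (K - \<i> \<cdot>\<^sub>m jj)" and P2: "psd (K - (- \<i>) \<cdot>\<^sub>m jj)"
  shows "\<exists>\<gamma>. is_CM 1 \<gamma> \<and> det \<gamma> = 1 \<and> psd (K - cmat \<gamma>)"
proof -
  define a where "a = Re (K $$ (0,0))"
  define d where "d = Re (K $$ (1,1))"
  define b where "b = K $$ (0,1)"
  define x where "x = Re b"
  define y where "y = Im b"
  note hk = herm2[OF K hK]
  have K00: "K $$ (0,0) = complex_of_real a" unfolding a_def using hk(2) by (simp add: complex_eq_iff)
  have K11: "K $$ (1,1) = complex_of_real d" unfolding d_def using hk(3) by (simp add: complex_eq_iff)
  have K10: "K $$ (1,0) = cnj b" unfolding b_def using hk(1) .
  have iJ: "\<i> \<cdot>\<^sub>m jj \<in> carrier_mat 2 2" and miJ: "(- \<i>) \<cdot>\<^sub>m jj \<in> carrier_mat 2 2" by auto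
  have C1: "K - \<i> \<cdot>\<^sub>m jj \<in> carrier_mat 2 2" by (rule minus_carrier_mat[OF iJ])
  have C2: "K - (- \<i>) \<cdot>\<^sub>m jj \<in> carrier_mat 2 2" by (rule minus_carrier_mat[OF miJ])
  note n1 = psd2_nec[OF P1 C1] and n2 = psd2_nec[OF P2 C2]
  have e1: "(K - \<i> \<cdot>\<^sub>m jj) $$ (0,0) = K $$ (0,0)" "(K - \<i> \<cdot>\<^sub>m jj) $$ (1,1) = K $$ (1,1)"
      "(K - \<i> \<cdot>\<^sub>m jj) $$ (0,1) = b + \<i>"
    using K unfolding b_def by (simp_all add: jj_entries jj_entries2)
  have e2: "(K - (- \<i>) \<cdot>\<^sub>m jj) $$ (0,0) = K $$ (0,0)" "(K - (- \<i>) \<cdot>\<^sub>m jj) $$ (1,1) = K $$ (1,1)"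
      "(K - (- \<i>) \<cdot>\<^sub>m jj) $$ (0,1) = b - \<i>"
    using K unfolding b_def by (simp_all add: jj_entries jj_entries2)
  have a0: "0 \<le> a" and d0: "0 \<le> d" using n1 e1 unfolding a_def d_def by auto
  have h1': "(cmod (b + \<i>))\<^sup>2 \<le> a * d" using n1(3) unfolding e1 a_def d_def .
  have h2': "(cmod (b - \<i>))\<^sup>2 \<le> a * d" using n2(3) unfolding e2 a_def d_def .
  have h1: "x\<^sup>2 + (y + 1)\<^sup>2 \<le> a * d" using h1' unfolding cmod_sq x_def y_def by simp
  have h2: "x\<^sup>2 + (y - 1)\<^sup>2 \<le> a * d" using h2' unfolding cmod_sq x_def y_def by simp
  define c where "c = 1 / sqrt (a * d - x\<^sup>2)"
  note rc = real_core[OF a0 d0 h1 h2, folded c_def]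
  define \<gamma> where "\<gamma> = m2 (c * a) (c * x) (c * d)"
  have det: "det \<gamma> = 1" unfolding \<gamma>_def m2_det using rc(3) by (simp add: power2_eq_square algebra_simps)
  have g2: "\<gamma> \<in> carrier_mat 2 2" unfolding \<gamma>_def by simp
  have cg: "cmat \<gamma> \<in> carrier_mat 2 2" using g2 by simp
  have adjg: "mat_adjoint (cmat \<gamma>) = cmat \<gamma>" unfolding adj_cmat \<gamma>_def m2_transpose ..
  have pd: "real_pd \<gamma>" unfolding \<gamma>_def
  proof (rule m2_pd)
    show "0 < c * a" using rc by simp
    show "0 < c * a * (c * d) - c * x * (c * x)" using rc(3) by (simp add: power2_eq_square algebra_simps)
  qed
  have ge: "loewner_ge (cmat \<gamma>) (\<i> \<cdot>\<^sub>m Jmodes 1 {})"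
    unfolding loewner_ge_def
  proof (intro conjI)
    show "dim_row (cmat \<gamma>) = dim_row (\<i> \<cdot>\<^sub>m Jmodes 1 {})" "dim_col (cmat \<gamma>) = dim_col (\<i> \<cdot>\<^sub>m Jmodes 1 {})"
      using g2 by auto
    show "psd (cmat \<gamma> - \<i> \<cdot>\<^sub>m Jmodes 1 {})"
    proof (rule psd2_suff)
      show C: "cmat \<gamma> - \<i> \<cdot>\<^sub>m jj \<in> carrier_mat 2 2" by (rule minus_carrier_mat[OF iJ])
      show "mat_adjoint (cmat \<gamma> - \<i> \<cdot>\<^sub>m jj) = cmat \<gamma> - \<i> \<cdot>\<^sub>m jj"
        using adj_minus[OF cg iJ] adjg adj_iJ by simp
      have f: "(cmat \<gamma> - \<i> \<cdot>\<^sub>m jj) $$ (0,0) = complex_of_real (c * a)"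
         "(cmat \<gamma> - \<i> \<cdot>\<^sub>m jj) $$ (1,1) = complex_of_real (c * d)"
         "(cmat \<gamma> - \<i> \<cdot>\<^sub>m jj) $$ (0,1) = complex_of_real (c * x) + \<i>"
        unfolding \<gamma>_def by (simp_all add: jj_entries jj_entries2 m2_entries m2_entries2)
      show "0 \<le> Re ((cmat \<gamma> - \<i> \<cdot>\<^sub>m jj) $$ (0, 0))" using f rc by simp
      show "0 \<le> Re ((cmat \<gamma> - \<i> \<cdot>\<^sub>m jj) $$ (1, 1))" using f rc by simp
      have "(cmod (complex_of_real (c * x) + \<i>))\<^sup>2 = (c * x)\<^sup>2 + 1" unfolding cmod_sq by simp
      also have "\<dots> = c * a * (c * d)" using rc(3) by (simp add: power2_eq_square algebra_simps)
      finally show "(cmod ((cmat \<gamma> - \<i> \<cdot>\<^sub>m jj) $$ (0, 1)))\<^sup>2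
          \<le> Re ((cmat \<gamma> - \<i> \<cdot>\<^sub>m jj) $$ (0, 0)) * Re ((cmat \<gamma> - \<i> \<cdot>\<^sub>m jj) $$ (1, 1))"
        using f by simp
    qed
  qed
  have cm: "is_CM 1 \<gamma>" unfolding is_CM_def using g2 pd ge unfolding \<gamma>_def by (simp add: m2_transpose)
  have ps: "psd (K - cmat \<gamma>)"
  proof (rule psd2_suff)
    show "K - cmat \<gamma> \<in> carrier_mat 2 2" by (rule minus_carrier_mat[OF cg])
    show "mat_adjoint (K - cmat \<gamma>) = K - cmat \<gamma>" using adj_minus[OF K cg] adjg hK by simp
    have f: "(K - cmat \<gamma>) $$ (0,0) = complex_of_real (a - c * a)"
       "(K - cmat \<gamma>) $$ (1,1) = complex_of_real (d - c * d)"
       "(K - cmat \<gamma>) $$ (0,1) = b - complex_of_real (c * x)"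
      using K K00 K11 unfolding \<gamma>_def b_def by (simp_all add: m2_entries m2_entries2)
    show "0 \<le> Re ((K - cmat \<gamma>) $$ (0, 0))" using f rc a0 by (simp add: mult_left_le_one_le)
    show "0 \<le> Re ((K - cmat \<gamma>) $$ (1, 1))" using f rc d0 by (simp add: mult_left_le_one_le)
    have "(cmod (b - complex_of_real (c * x)))\<^sup>2 = (1 - c)\<^sup>2 * x\<^sup>2 + y\<^sup>2"
      unfolding cmod_sq x_def y_def by (simp add: power2_eq_square algebra_simps)
    also have "\<dots> \<le> (1 - c)\<^sup>2 * x\<^sup>2 + (1 - c)\<^sup>2 * (a * d - x\<^sup>2)" using rc(4) by simp
    also have "\<dots> = (a - c * a) * (d - c * d)" by (simp add: power2_eq_square algebra_simps)
    finally show "(cmod ((K - cmat \<gamma>) $$ (0, 1)))\<^sup>2 \<le> Re ((K - cmat \<gamma>) $$ (0, 0)) * Re ((K - cmat \<gamma>) $$ (1, 1))"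
      using f by simp
  qed
  show ?thesis using cm det ps by blast
qed

lemma minus_four_block: assumes
  c1: "A1 \<in> carrier_mat nr1 nc1" "B1 \<in> carrier_mat nr1 nc2" "C1 \<in> carrier_mat nr2 nc1" "D1 \<in> carrier_mat nr2 nc2" and
  c2: "A2 \<in> carrier_mat nr1 nc1" "B2 \<in> carrier_mat nr1 nc2" "C2 \<in> carrier_mat nr2 nc1" "D2 \<in> carrier_mat nr2 nc2"
  shows "four_block_mat A1 B1 C1 D1 - four_block_mat A2 B2 C2 D2
  = four_block_mat (A1 - A2) (B1 - B2) (C1 - C2) (D1 - (D2 :: complex mat))"
  by (rule eq_matI) (insert assms, auto)

lemma dsum_four: assumes "R \<in> carrier_mat k k" "Q \<in> carrier_mat m m"
  shows "dsum R Q = four_block_mat R (0\<^sub>m k m) (0\<^sub>m m k) Q"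
  using assms unfolding dsum_def by auto

lemma minus_swap: assumes "(A::complex mat) \<in> carrier_mat n m" "B \<in> carrier_mat n m" "T \<in> carrier_mat n m"
  shows "A - B - T = A - T - B"
  by (rule eq_matI) (use assms in auto)

lemma split_four: assumes W: "(W::complex mat) \<in> carrier_mat (k + m) (k + m)"
  shows "\<exists>X C C' Y. X \<in> carrier_mat k k \<and> C \<in> carrier_mat k m \<and> C' \<in> carrier_mat m k \<and> Y \<in> carrier_mat m m
     \<and> W = four_block_mat X C C' Y"
proof -
  obtain X C C' Y where sb: "split_block W k k = (X, C, C', Y)" by (cases "split_block W k k") auto
  have dims: "dim_row W = k + m" "dim_col W = k + m" using W by auto
  note r = split_block[OF sb dims]
  show ?thesis using r by blast
qed

lemma decouple: assumes W: "(W::complex mat) \<in> carrier_mat (2 + m) (2 + m)" and Q: "Q \<in> carrier_mat m m"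
  and P1: "psd (W - dsum (\<i> \<cdot>\<^sub>m jj) Q)" and P2: "psd (W - dsum ((- \<i>) \<cdot>\<^sub>m jj) Q)"
  shows "\<exists>\<gamma>. is_CM 1 \<gamma> \<and> det \<gamma> = 1 \<and> psd (W - dsum (cmat \<gamma>) Q)"
proof -
  obtain X C C' Y where X: "X \<in> carrier_mat 2 2" and C: "C \<in> carrier_mat 2 m" and C': "C' \<in> carrier_mat m 2"
    and Y: "Y \<in> carrier_mat m m" and Weq: "W = four_block_mat X C C' Y"
    using split_four[OF W] by blast
  have z1: "0\<^sub>m 2 m \<in> carrier_mat 2 m" and z2: "0\<^sub>m m 2 \<in> carrier_mat m 2" by auto
  have iJ: "\<i> \<cdot>\<^sub>m jj \<in> carrier_mat 2 2" and miJ: "(- \<i>) \<cdot>\<^sub>m jj \<in> carrier_mat 2 2" by auto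
  have Wsub: "W - dsum R Q = four_block_mat (X - R) C C' (Y - Q)" if R: "R \<in> carrier_mat 2 2" for R
  proof -
    have "W - dsum R Q = four_block_mat (X - R) (C - 0\<^sub>m 2 m) (C' - 0\<^sub>m m 2) (Y - Q)"
      unfolding Weq dsum_four[OF R Q] by (rule minus_four_block[OF X C C' Y R z1 z2 Q])
    moreover have "C - 0\<^sub>m 2 m = C" by (rule eq_matI) (use C in auto)
    moreover have "C' - 0\<^sub>m m 2 = C'" by (rule eq_matI) (use C' in auto)
    ultimately show ?thesis by simp
  qed
  have XR: "X - R \<in> carrier_mat 2 2" if "R \<in> carrier_mat 2 2" for R using minus_carrier_mat[OF that] .
  have YQ: "Y - Q \<in> carrier_mat m m" by (rule minus_carrier_mat[OF Q])
  have P1': "psd (four_block_mat (X - \<i> \<cdot>\<^sub>m jj) C C' (Y - Q))" using P1 Wsub[OF iJ] by simp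
  have P2': "psd (four_block_mat (X - (- \<i>) \<cdot>\<^sub>m jj) C C' (Y - Q))" using P2 Wsub[OF miJ] by simp
  note D1 = psd_four_block_D[OF XR[OF iJ] C C' YQ P1']
  note D2 = psd_four_block_D[OF XR[OF miJ] C C' YQ P2']
  have C'eq: "C' = mat_adjoint C" using D1(3) .
  have P1'': "psd (four_block_mat (X - \<i> \<cdot>\<^sub>m jj) C (mat_adjoint C) (Y - Q))" using P1' C'eq by simp
  have P2'': "psd (four_block_mat (X - (- \<i>) \<cdot>\<^sub>m jj) C (mat_adjoint C) (Y - Q))" using P2' C'eq by simp
  have hYQ: "mat_adjoint (Y - Q) = Y - Q" using psdD(2)[OF D1(1)] .
  define G where "G = pinv (Y - Q)"
  note pp = pinv_props[OF YQ hYQ, folded G_def]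
  have Ca: "mat_adjoint C \<in> carrier_mat m 2" using C by simp
  have CGC: "C * G * mat_adjoint C \<in> carrier_mat 2 2" using C pp(1) Ca by (meson mult_carrier_mat)
  have hX: "mat_adjoint X = X"
  proof (rule minus_cancel_mat[OF _ X iJ])
    show "mat_adjoint X \<in> carrier_mat 2 2" using X by simp
    have "mat_adjoint (X - \<i> \<cdot>\<^sub>m jj) = X - \<i> \<cdot>\<^sub>m jj" using psdD(2)[OF D1(2)] .
    then show "mat_adjoint X - \<i> \<cdot>\<^sub>m jj = X - \<i> \<cdot>\<^sub>m jj" using adj_minus[OF X iJ] adj_iJ by simp
  qed
  define K where "K = X - C * G * mat_adjoint C"
  have K: "K \<in> carrier_mat 2 2" unfolding K_def by (rule minus_carrier_mat[OF CGC])
  have hK: "mat_adjoint K = K" unfolding K_def using adj_minus[OF X CGC] hX adj_sandwich[OF C pp(1) pp(4)] by simp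
  have S1: "psd (X - \<i> \<cdot>\<^sub>m jj - C * G * mat_adjoint C)"
    by (rule schur_fwd[OF XR[OF iJ] C YQ pp(1) P1'' pp(4) pp(3)])
  have S2: "psd (X - (- \<i>) \<cdot>\<^sub>m jj - C * G * mat_adjoint C)"
    by (rule schur_fwd[OF XR[OF miJ] C YQ pp(1) P2'' pp(4) pp(3)])
  have K1: "psd (K - \<i> \<cdot>\<^sub>m jj)" using S1 minus_swap[OF X iJ CGC] unfolding K_def by simp
  have K2: "psd (K - (- \<i>) \<cdot>\<^sub>m jj)" using S2 minus_swap[OF X miJ CGC] unfolding K_def by simp
  obtain \<gamma> where cm: "is_CM 1 \<gamma>" and det: "det \<gamma> = 1" and pK: "psd (K - cmat \<gamma>)"
    using cm_extract[OF K hK K1 K2] by blast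
  have g: "cmat \<gamma> \<in> carrier_mat 2 2" using cm unfolding is_CM_def by simp
  have ker: "(Y - Q) * G * mat_adjoint C = mat_adjoint C"
    by (rule kernel_cond[OF XR[OF iJ] C YQ pp(1) P1'' pp(4) pp(2)])
  have pS: "psd (X - cmat \<gamma> - C * G * mat_adjoint C)"
    using pK minus_swap[OF X g CGC] unfolding K_def by simp
  have "psd (four_block_mat (X - cmat \<gamma>) C (mat_adjoint C) (Y - Q))"
    by (rule schur_rev[OF XR[OF g] C YQ pp(1) D1(1) pp(4) ker pS])
  then have "psd (W - dsum (cmat \<gamma>) Q)" using Wsub[OF g] C'eq by simp
  then show ?thesis using cm det by blast
qed

lemma less6: "i < (6::nat) \<Longrightarrow> i = 0 \<or> i = 1 \<or> i = 2 \<or> i = 3 \<or> i = 4 \<or> i = 5" by auto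
lemma less4: "i < (4::nat) \<Longrightarrow> i = 0 \<or> i = 1 \<or> i = 2 \<or> i = 3" by auto
lemma less2: "i < (2::nat) \<Longrightarrow> i = 0 \<or> i = 1" by auto

lemma dsum_carrier[simp]: "A \<in> carrier_mat n n \<Longrightarrow> B \<in> carrier_mat m m \<Longrightarrow> dsum A B \<in> carrier_mat (n + m) (n + m)"
  unfolding dsum_def by simp

lemma dsum_dims[simp]: "dim_row (dsum A B) = dim_row A + dim_row B" "dim_col (dsum A B) = dim_col A + dim_col B"
  unfolding dsum_def by simp_all

definition blk3 :: "'a mat \<Rightarrow> 'a mat \<Rightarrow> 'a mat \<Rightarrow> nat \<Rightarrow> 'a mat" where
  "blk3 a b c k = (if k = 0 then a else if k = 1 then b else c)"

lemma d3_index: assumes a: "a \<in> carrier_mat 2 2" and b: "b \<in> carrier_mat 2 2" and c: "c \<in> carrier_mat 2 2"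
  and i: "i < 6" and j: "j < 6"
  shows "dsum a (dsum b (c :: 'a :: zero mat)) $$ (i,j) = (if i div 2 = j div 2 then blk3 a b c (i div 2) $$ (i mod 2, j mod 2) else 0)"
  using less6[OF i] less6[OF j] a b c
  by (elim disjE) (simp_all add: dsum_def blk3_def)

definition rot :: "'a mat \<Rightarrow> 'a mat" where
  "rot X = mat 6 6 (\<lambda>(i,j). X $$ ((i + 2) mod 6, (j + 2) mod 6))"

lemma rot_carrier[simp]: "rot X \<in> carrier_mat 6 6" by (simp add: rot_def)
lemma rot_dims[simp]: "dim_row (rot X) = 6" "dim_col (rot X) = 6" by (simp_all add: rot_def)
lemma rot_index[simp]: "i < 6 \<Longrightarrow> j < 6 \<Longrightarrow> rot X $$ (i,j) = X $$ ((i + 2) mod 6, (j + 2) mod 6)"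
  by (simp add: rot_def)

lemma rot_idx3: "i < 6 \<Longrightarrow> (((i + 2) mod 6 + 2) mod 6 + 2) mod 6 = (i::nat)"
  by (drule less6) auto

lemma rot_idx_inv: "i < 6 \<Longrightarrow> ((i + 4) mod 6 + 2) mod 6 = (i::nat)" "i < 6 \<Longrightarrow> ((i + 2) mod 6 + 4) mod 6 = (i::nat)"
  by (drule less6, auto)+

lemma sum6_rot: "(\<Sum>i<6. f ((i + 2) mod 6)) = (\<Sum>i<(6::nat). f i)"
  by (rule sum.reindex_bij_witness[of _ "\<lambda>i. (i + 4) mod 6" "\<lambda>i. (i + 2) mod 6"]) (auto dest!: less6)

lemma rot_minus: assumes "(X::complex mat) \<in> carrier_mat 6 6" "Y \<in> carrier_mat 6 6"
  shows "rot (X - Y) = rot X - rot Y"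
  by (rule eq_matI) (use assms in auto)

lemma rot3: assumes "(X::'a mat) \<in> carrier_mat 6 6" shows "rot (rot (rot X)) = X"
proof (rule eq_matI)
  fix i j assume "i < dim_row X" "j < dim_col X"
  then have i: "i < 6" and j: "j < 6" using assms by auto
  have m: "(i + 2) mod 6 < 6" "(j + 2) mod 6 < 6" "((i + 2) mod 6 + 2) mod 6 < 6" "((j + 2) mod 6 + 2) mod 6 < 6" by auto
  show "rot (rot (rot X)) $$ (i, j) = X $$ (i, j)"
    unfolding rot_index[OF i j] rot_index[OF m(1,2)] rot_index[OF m(3,4)] rot_idx3[OF i] rot_idx3[OF j] ..
qed (use assms in auto)

lemma rot_d3: assumes a: "a \<in> carrier_mat 2 2" and b: "b \<in> carrier_mat 2 2" and c: "c \<in> carrier_mat 2 2"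
  shows "rot (dsum a (dsum b (c :: 'a :: zero mat))) = dsum b (dsum c a)"
proof (rule eq_matI)
  fix i j assume "i < dim_row (dsum b (dsum c a))" "j < dim_col (dsum b (dsum c a))"
  then have i: "i < 6" and j: "j < 6" using a b c by auto
  have m1: "(i + 2) mod 6 < 6" "(j + 2) mod 6 < 6" by auto
  show "rot (dsum a (dsum b c)) $$ (i, j) = dsum b (dsum c a) $$ (i, j)"
    unfolding rot_index[OF i j] d3_index[OF a b c m1] d3_index[OF b c a i j]
    using less6[OF i] less6[OF j] by (elim disjE) (simp_all add: blk3_def)
qed (use a b c in auto)

lemma psd_rot: assumes P: "psd X" and X: "(X::complex mat) \<in> carrier_mat 6 6"
  shows "psd (rot X)"
proof (rule psdI)
  show "rot X \<in> carrier_mat 6 6" by simp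
  have hX: "mat_adjoint X = X" using psdD(2)[OF P] .
  have e: "\<And>i j. i < 6 \<Longrightarrow> j < 6 \<Longrightarrow> cnj (X $$ (j,i)) = X $$ (i,j)"
    using X hX by (metis adj_index carrier_matD(1) carrier_matD(2))
  show "mat_adjoint (rot X) = rot X"
  proof (rule eq_matI)
    fix i j assume "i < dim_row (rot X)" "j < dim_col (rot X)"
    then have i: "i < 6" and j: "j < 6" by auto
    show "mat_adjoint (rot X) $$ (i, j) = rot X $$ (i, j)" using i j e[of "(i + 2) mod 6" "(j + 2) mod 6"] by simp
  qed auto
  fix v :: "complex vec" assume v: "v \<in> carrier_vec 6"
  define w where "w = vec 6 (\<lambda>k. v $ ((k + 4) mod 6))"
  have w: "w \<in> carrier_vec 6" unfolding w_def by simp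
  have wi: "w $ ((i + 2) mod 6) = v $ i" if "i < 6" for i
    unfolding w_def using less6[OF that] by (elim disjE) simp_all
  have wi': "w $ (Suc (Suc i) mod 6) = v $ i" if "i < 6" for i using wi[OF that] by simp
  have "(rot X *\<^sub>v v) \<bullet>c v = (\<Sum>i<6. (\<Sum>j<6. X $$ ((i + 2) mod 6, (j + 2) mod 6) * v $ j) * cnj (v $ i))"
    using v by (simp add: scalar_prod_def lessThan_atLeast0 conjugate_complex_def)
  also have "\<dots> = (\<Sum>i<6. (\<Sum>j<6. X $$ ((i + 2) mod 6, (j + 2) mod 6) * w $ ((j + 2) mod 6)) * cnj (w $ ((i + 2) mod 6)))"
    by (rule sum.cong[OF refl], rule arg_cong2[where f = "(*)"], rule sum.cong[OF refl]) (simp_all add: wi')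
  also have "\<dots> = (\<Sum>i<6. (\<Sum>j<6. X $$ ((i + 2) mod 6, j) * w $ j) * cnj (w $ ((i + 2) mod 6)))"
    by (subst sum6_rot[where f = "\<lambda>j. X $$ (_, j) * w $ j"]) simp
  also have "\<dots> = (\<Sum>i<6. (\<Sum>j<6. X $$ (i, j) * w $ j) * cnj (w $ i))"
    by (rule sum6_rot[where f = "\<lambda>i. (\<Sum>j<6. X $$ (i, j) * w $ j) * cnj (w $ i)"])
  also have "\<dots> = (X *\<^sub>v w) \<bullet>c w"
    using X w by (simp add: scalar_prod_def lessThan_atLeast0 conjugate_complex_def)
  finally have eq: "(rot X *\<^sub>v v) \<bullet>c v = (X *\<^sub>v w) \<bullet>c w" .
  have "dim_row X = 6" using X by simp
  then show "0 \<le> Re ((rot X *\<^sub>v v) \<bullet>c v)" unfolding eq using psdD(3)[OF P] w by simp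
qed

lemma gamma_four: assumes g: "\<gamma> \<in> carrier_mat 6 6" and s: "transpose_mat \<gamma> = \<gamma>"
  shows "blkA \<gamma> \<in> carrier_mat 2 2" "blkC \<gamma> \<in> carrier_mat 2 4" "blkB \<gamma> \<in> carrier_mat 4 4"
    "cmat \<gamma> = four_block_mat (cmat (blkA \<gamma>)) (cmat (blkC \<gamma>)) (mat_adjoint (cmat (blkC \<gamma>))) (cmat (blkB \<gamma>))"
proof -
  obtain A C L B where sb: "split_block \<gamma> 2 2 = (A, C, L, B)" by (cases "split_block \<gamma> 2 2") auto
  have dims: "dim_row \<gamma> = 2 + 4" "dim_col \<gamma> = 2 + 4" using g by auto
  note r = split_block[OF sb dims]
  have bA: "blkA \<gamma> = A" and bC: "blkC \<gamma> = C" and bB: "blkB \<gamma> = B" unfolding blkA_def blkC_def blkB_def sb by simp_all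
  show "blkA \<gamma> \<in> carrier_mat 2 2" "blkC \<gamma> \<in> carrier_mat 2 4" "blkB \<gamma> \<in> carrier_mat 4 4" using r bA bC bB by auto
  have Lt: "L = transpose_mat C"
  proof (rule eq_matI)
    fix i j assume "i < dim_row (transpose_mat C)" "j < dim_col (transpose_mat C)"
    then have i: "i < 4" and j: "j < 2" using r by auto
    have sym: "\<gamma> $$ (i + 2, j) = \<gamma> $$ (j, i + 2)"
    proof -
      have "transpose_mat \<gamma> $$ (i + 2, j) = \<gamma> $$ (j, i + 2)" using g i j by simp
      then show ?thesis using s by simp
    qed
    have "L $$ (i,j) = \<gamma> $$ (i + 2, j)" using sb i j g unfolding split_block_def Let_def by auto
    moreover have "C $$ (j,i) = \<gamma> $$ (j, i + 2)" using sb i j g unfolding split_block_def Let_def by auto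
    ultimately show "L $$ (i,j) = transpose_mat C $$ (i,j)" using sym i j r by simp
  qed (use r in auto)
  have "cmat \<gamma> = map_mat complex_of_real (four_block_mat A C L B)" unfolding cmat_def using r by simp
  also have "\<dots> = four_block_mat (cmat A) (cmat C) (cmat L) (cmat B)"
    unfolding cmat_def by (rule map_four_block_mat) (use r in auto)
  finally show "cmat \<gamma> = four_block_mat (cmat (blkA \<gamma>)) (cmat (blkC \<gamma>)) (mat_adjoint (cmat (blkC \<gamma>))) (cmat (blkB \<gamma>))"
    unfolding bA bB bC Lt adj_cmat .
qed

lemma J3_0: "\<i> \<cdot>\<^sub>m Jmodes 3 {} = dsum (\<i> \<cdot>\<^sub>m jj) (dsum (\<i> \<cdot>\<^sub>m jj) (\<i> \<cdot>\<^sub>m jj))"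
proof (rule eq_matI)
  fix i j assume "i < dim_row (dsum (\<i> \<cdot>\<^sub>m jj) (dsum (\<i> \<cdot>\<^sub>m jj) (\<i> \<cdot>\<^sub>m jj)))"
    "j < dim_col (dsum (\<i> \<cdot>\<^sub>m jj) (dsum (\<i> \<cdot>\<^sub>m jj) (\<i> \<cdot>\<^sub>m jj)))"
  then have i: "i < 6" and j: "j < 6" by auto
  show "(\<i> \<cdot>\<^sub>m Jmodes 3 {}) $$ (i, j) = dsum (\<i> \<cdot>\<^sub>m jj) (dsum (\<i> \<cdot>\<^sub>m jj) (\<i> \<cdot>\<^sub>m jj)) $$ (i, j)"
    using less6[OF i] less6[OF j] by (elim disjE) (simp_all add: Jmodes_def dsum_def)
qed auto

lemma J3_2: "\<i> \<cdot>\<^sub>m Jmodes 3 {2} = dsum (\<i> \<cdot>\<^sub>m jj) (dsum (\<i> \<cdot>\<^sub>m jj) ((- \<i>) \<cdot>\<^sub>m jj))"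
proof (rule eq_matI)
  fix i j assume "i < dim_row (dsum (\<i> \<cdot>\<^sub>m jj) (dsum (\<i> \<cdot>\<^sub>m jj) ((- \<i>) \<cdot>\<^sub>m jj)))"
    "j < dim_col (dsum (\<i> \<cdot>\<^sub>m jj) (dsum (\<i> \<cdot>\<^sub>m jj) ((- \<i>) \<cdot>\<^sub>m jj)))"
  then have i: "i < 6" and j: "j < 6" by auto
  show "(\<i> \<cdot>\<^sub>m Jmodes 3 {2}) $$ (i, j) = dsum (\<i> \<cdot>\<^sub>m jj) (dsum (\<i> \<cdot>\<^sub>m jj) ((- \<i>) \<cdot>\<^sub>m jj)) $$ (i, j)"
    using less6[OF i] less6[OF j] by (elim disjE) (simp_all add: Jmodes_def dsum_def)
qed auto

lemma J2_0: "\<i> \<cdot>\<^sub>m Jmodes 2 {} = dsum (\<i> \<cdot>\<^sub>m jj) (\<i> \<cdot>\<^sub>m jj)"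
proof (rule eq_matI)
  fix i j assume "i < dim_row (dsum (\<i> \<cdot>\<^sub>m jj) (\<i> \<cdot>\<^sub>m jj))" "j < dim_col (dsum (\<i> \<cdot>\<^sub>m jj) (\<i> \<cdot>\<^sub>m jj))"
  then have i: "i < 4" and j: "j < 4" by auto
  show "(\<i> \<cdot>\<^sub>m Jmodes 2 {}) $$ (i, j) = dsum (\<i> \<cdot>\<^sub>m jj) (\<i> \<cdot>\<^sub>m jj) $$ (i, j)"
    using less4[OF i] less4[OF j] by (elim disjE) (simp_all add: Jmodes_def dsum_def)
qed auto

lemma J2_1: "\<i> \<cdot>\<^sub>m Jmodes 2 {1} = dsum (\<i> \<cdot>\<^sub>m jj) ((- \<i>) \<cdot>\<^sub>m jj)"
proof (rule eq_matI)
  fix i j assume "i < dim_row (dsum (\<i> \<cdot>\<^sub>m jj) ((- \<i>) \<cdot>\<^sub>m jj))" "j < dim_col (dsum (\<i> \<cdot>\<^sub>m jj) ((- \<i>) \<cdot>\<^sub>m jj))"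
  then have i: "i < 4" and j: "j < 4" by auto
  show "(\<i> \<cdot>\<^sub>m Jmodes 2 {1}) $$ (i, j) = dsum (\<i> \<cdot>\<^sub>m jj) ((- \<i>) \<cdot>\<^sub>m jj) $$ (i, j)"
    using less4[OF i] less4[OF j] by (elim disjE) (simp_all add: Jmodes_def dsum_def)
qed auto

abbreviation z2 :: "complex mat" where "z2 \<equiv> 0\<^sub>m 2 2"

lemma four_minus_dsum: assumes X: "(X::complex mat) \<in> carrier_mat k k" and C: "C \<in> carrier_mat k m"
  and C': "C' \<in> carrier_mat m k" and Y: "Y \<in> carrier_mat m m" and R: "R \<in> carrier_mat k k" and T: "T \<in> carrier_mat m m"
  shows "four_block_mat X C C' Y - dsum R T = four_block_mat (X - R) C C' (Y - T)"
proof -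
  have z1: "0\<^sub>m k m \<in> carrier_mat k m" and z2: "0\<^sub>m m k \<in> carrier_mat m k" by auto
  have "four_block_mat X C C' Y - dsum R T = four_block_mat (X - R) (C - 0\<^sub>m k m) (C' - 0\<^sub>m m k) (Y - T)"
    unfolding dsum_four[OF R T] by (rule minus_four_block[OF X C C' Y R z1 z2 T])
  moreover have "C - 0\<^sub>m k m = C" by (rule eq_matI) (use C in auto)
  moreover have "C' - 0\<^sub>m m k = C'" by (rule eq_matI) (use C' in auto)
  ultimately show ?thesis by simp
qed

lemma d3_split: assumes X: "(X::complex mat) \<in> carrier_mat 6 6" and a: "a \<in> carrier_mat 2 2"
  and b: "b \<in> carrier_mat 2 2" and c: "c \<in> carrier_mat 2 2"
  shows "X - dsum a (dsum b c) = (X - dsum a (dsum z2 z2)) - dsum z2 (dsum b c)"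
proof (rule eq_matI)
  have z: "z2 \<in> carrier_mat 2 2" by simp
  fix i j assume "i < dim_row ((X - dsum a (dsum z2 z2)) - dsum z2 (dsum b c))"
    "j < dim_col ((X - dsum a (dsum z2 z2)) - dsum z2 (dsum b c))"
  then have i: "i < 6" and j: "j < 6" using a b c by auto
  have m: "i mod 2 < 2" "j mod 2 < 2" by auto
  show "(X - dsum a (dsum b c)) $$ (i, j) = ((X - dsum a (dsum z2 z2)) - dsum z2 (dsum b c)) $$ (i, j)"
    using i j X a b c m unfolding index_minus_mat(1)[of i _ j]
    by (simp add: d3_index[OF a b c i j] d3_index[OF a z z i j] d3_index[OF z b c i j] blk3_def)
qed (use X a b c in auto)

lemma conj_d3: assumes X: "(X::complex mat) \<in> carrier_mat 6 6" and a: "a \<in> carrier_mat 2 2"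
  and b: "b \<in> carrier_mat 2 2" and c: "c \<in> carrier_mat 2 2"
  shows "map_mat cnj (X - dsum a (dsum b c)) = map_mat cnj X - dsum (map_mat cnj a) (dsum (map_mat cnj b) (map_mat cnj c))"
proof (rule eq_matI)
  have a': "map_mat cnj a \<in> carrier_mat 2 2" and b': "map_mat cnj b \<in> carrier_mat 2 2"
    and c': "map_mat cnj c \<in> carrier_mat 2 2" using a b c by (auto intro!: carrier_matI)
  fix i j assume "i < dim_row (map_mat cnj X - dsum (map_mat cnj a) (dsum (map_mat cnj b) (map_mat cnj c)))"
    "j < dim_col (map_mat cnj X - dsum (map_mat cnj a) (dsum (map_mat cnj b) (map_mat cnj c)))"
  then have i: "i < 6" and j: "j < 6" using a b c by auto
  have m: "i mod 2 < 2" "j mod 2 < 2" by auto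
  show "map_mat cnj (X - dsum a (dsum b c)) $$ (i, j) = (map_mat cnj X - dsum (map_mat cnj a) (dsum (map_mat cnj b) (map_mat cnj c))) $$ (i, j)"
    using i j X a b c m
    by (simp add: d3_index[OF a b c i j] d3_index[OF a' b' c' i j] blk3_def)
qed (use X a b c in auto)

lemma conj_iJ: "map_mat cnj (\<i> \<cdot>\<^sub>m jj) = (- \<i>) \<cdot>\<^sub>m jj" "map_mat cnj ((- \<i>) \<cdot>\<^sub>m jj) = \<i> \<cdot>\<^sub>m jj"
  by (rule eq_matI, auto simp: Jmodes_real)+

lemma conj_z: "map_mat cnj (0\<^sub>m n m :: complex mat) = 0\<^sub>m n m" by (rule eq_matI) auto

lemma conj_cmat: "map_mat cnj (cmat M) = cmat M" by (rule eq_matI) auto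

lemma conj_rot: "(X::complex mat) \<in> carrier_mat 6 6 \<Longrightarrow> map_mat cnj (rot X) = rot (map_mat cnj X)"
  by (rule eq_matI) auto

lemma conj_minus: assumes "(X::complex mat) \<in> carrier_mat n m" "Y \<in> carrier_mat n m"
  shows "map_mat cnj (X - Y) = map_mat cnj X - map_mat cnj Y"
  by (rule eq_matI) (use assms in auto)

lemma cmat_dsum: "cmat (dsum A B) = dsum (cmat A) (cmat B)"
  by (rule eq_matI) (auto simp: dsum_def)

lemma psd_dsum: assumes A: "psd A" "(A::complex mat) \<in> carrier_mat k k" and B: "psd B" "B \<in> carrier_mat m m"
  shows "psd (dsum A B)"
proof (rule psdI)
  have z1: "0\<^sub>m k m \<in> carrier_mat k m" and z2: "0\<^sub>m m k \<in> carrier_mat m k" by auto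
  show "dsum A B \<in> carrier_mat (k + m) (k + m)" using A B by simp
  show "mat_adjoint (dsum A B) = dsum A B"
    unfolding dsum_four[OF A(2) B(2)] adj_four_block[OF A(2) z1 z2 B(2)] using psdD(2)[OF A(1)] psdD(2)[OF B(1)] by simp
  fix v :: "complex vec" assume v: "v \<in> carrier_vec (k + m)"
  define u where "u = vec_first v k"
  define w where "w = vec_last v m"
  have u: "u \<in> carrier_vec k" and w: "w \<in> carrier_vec m" unfolding u_def w_def by auto
  have vuw: "v = u @\<^sub>v w" unfolding u_def w_def using v by simp
  have "(dsum A B *\<^sub>v v) \<bullet>c v = (A *\<^sub>v u) \<bullet>c u + (0\<^sub>m k m *\<^sub>v w) \<bullet>c u + (0\<^sub>m m k *\<^sub>v u) \<bullet>c w + (B *\<^sub>v w) \<bullet>c w"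
    unfolding vuw dsum_four[OF A(2) B(2)] by (rule qf_four_block[OF A(2) z1 z2 B(2) u w])
  also have "\<dots> = (A *\<^sub>v u) \<bullet>c u + (B *\<^sub>v w) \<bullet>c w"
    using u w by (simp add: zero_mat_vec ip_zero_left)
  finally have e: "(dsum A B *\<^sub>v v) \<bullet>c v = (A *\<^sub>v u) \<bullet>c u + (B *\<^sub>v w) \<bullet>c w" .
  have "dim_row A = k" "dim_row B = m" using A B by auto
  then show "0 \<le> Re ((dsum A B *\<^sub>v v) \<bullet>c v)" unfolding e using psdD(3)[OF A(1)] psdD(3)[OF B(1)] u w by simp
qed

lemma schur_equiv: assumes X: "(X::complex mat) \<in> carrier_mat k k" and C: "C \<in> carrier_mat k m"
  and Y: "Y \<in> carrier_mat m m" and R: "R \<in> carrier_mat k k" and R0: "R0 \<in> carrier_mat k k"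
  and PJ: "psd (four_block_mat (X - R0) C (mat_adjoint C) Y)"
  shows "psd ((X - C * pinv Y * mat_adjoint C) - R) \<longleftrightarrow> psd (four_block_mat (X - R) C (mat_adjoint C) Y)"
proof -
  have Ca: "mat_adjoint C \<in> carrier_mat m k" using C by simp
  have XR0: "X - R0 \<in> carrier_mat k k" by (rule minus_carrier_mat[OF R0])
  have XR: "X - R \<in> carrier_mat k k" by (rule minus_carrier_mat[OF R])
  note D = psd_four_block_D[OF XR0 C Ca Y PJ]
  have hY: "mat_adjoint Y = Y" using psdD(2)[OF D(1)] .
  define G where "G = pinv Y"
  note pp = pinv_props[OF Y hY, folded G_def]
  have CGC: "C * G * mat_adjoint C \<in> carrier_mat k k" using C pp(1) Ca by (meson mult_carrier_mat)
  have sw: "X - C * G * mat_adjoint C - R = X - R - C * G * mat_adjoint C" by (rule minus_swap[OF X CGC R])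
  show ?thesis unfolding G_def[symmetric] sw
  proof
    assume "psd (X - R - C * G * mat_adjoint C)"
    moreover have "Y * G * mat_adjoint C = mat_adjoint C"
      by (rule kernel_cond[OF XR0 C Y pp(1) PJ pp(4) pp(2)])
    ultimately show "psd (four_block_mat (X - R) C (mat_adjoint C) Y)"
      using schur_rev[OF XR C Y pp(1) D(1) pp(4)] by blast
  next
    assume "psd (four_block_mat (X - R) C (mat_adjoint C) Y)"
    then show "psd (X - R - C * G * mat_adjoint C)" by (rule schur_fwd[OF XR C Y pp(1) _ pp(4) pp(3)])
  qed
qed

lemma d3_lin: assumes X: "(X::complex mat) \<in> carrier_mat 6 6" and a: "a \<in> carrier_mat 2 2"
  and b: "b \<in> carrier_mat 2 2" and c: "c \<in> carrier_mat 2 2" and a': "a' \<in> carrier_mat 2 2"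
  and b': "b' \<in> carrier_mat 2 2" and c': "c' \<in> carrier_mat 2 2"
  shows "X - dsum a' (dsum b' c') = (X - dsum a (dsum b c)) + dsum (a - a') (dsum (b - b') (c - c'))"
proof (rule eq_matI)
  have a2: "a - a' \<in> carrier_mat 2 2" and b2: "b - b' \<in> carrier_mat 2 2" and c2: "c - c' \<in> carrier_mat 2 2"
    using a' b' c' by (auto intro: minus_carrier_mat)
  fix i j assume "i < dim_row ((X - dsum a (dsum b c)) + dsum (a - a') (dsum (b - b') (c - c')))"
    "j < dim_col ((X - dsum a (dsum b c)) + dsum (a - a') (dsum (b - b') (c - c')))"
  then have i: "i < 6" and j: "j < 6" using a' b' c' by auto
  have m: "i mod 2 < 2" "j mod 2 < 2" by auto
  show "(X - dsum a' (dsum b' c')) $$ (i, j) = ((X - dsum a (dsum b c)) + dsum (a - a') (dsum (b - b') (c - c'))) $$ (i, j)"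
    using i j X a b c a' b' c' m
    by (simp add: d3_index[OF a b c i j] d3_index[OF a' b' c' i j] d3_index[OF a2 b2 c2 i j] blk3_def)
qed (use X a b c a' b' c' in auto)

lemma psd_d3: assumes "psd a" "psd b" "psd c" "a \<in> carrier_mat 2 2" "b \<in> carrier_mat 2 2" "c \<in> carrier_mat 2 2"
  shows "psd (dsum a (dsum b c))"
proof -
  have p: "psd (dsum b c)" by (rule psd_dsum[OF assms(2) assms(5) assms(3) assms(6)])
  have c: "dsum b c \<in> carrier_mat 4 4" using assms dsum_carrier[of b 2 c 2] by simp
  show ?thesis by (rule psd_dsum[OF assms(1) assms(4) p c])
qed

lemma cm_props: assumes "is_CM 1 g"
  shows "g \<in> carrier_mat 2 2" "cmat g \<in> carrier_mat 2 2" "psd (cmat g - \<i> \<cdot>\<^sub>m jj)" "psd (cmat g - (- \<i>) \<cdot>\<^sub>m jj)"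
    "mat_adjoint (cmat g) = cmat g"
proof -
  show g: "g \<in> carrier_mat 2 2" using assms unfolding is_CM_def by simp
  then show cg: "cmat g \<in> carrier_mat 2 2" by simp
  show p: "psd (cmat g - \<i> \<cdot>\<^sub>m jj)" using assms unfolding is_CM_def loewner_ge_def by simp
  have iJ: "\<i> \<cdot>\<^sub>m jj \<in> carrier_mat 2 2" by auto
  have "map_mat cnj (cmat g - \<i> \<cdot>\<^sub>m jj) = cmat g - (- \<i>) \<cdot>\<^sub>m jj"
    using conj_minus[OF cg iJ] conj_cmat conj_iJ by simp
  then show "psd (cmat g - (- \<i>) \<cdot>\<^sub>m jj)" using psd_conj[OF p] by simp
  have "transpose_mat g = g" using assms unfolding is_CM_def by simp
  then show "mat_adjoint (cmat g) = cmat g" by (simp add: adj_cmat)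
qed

abbreviation iJ :: "complex mat" where "iJ \<equiv> \<i> \<cdot>\<^sub>m jj"
abbreviation miJ :: "complex mat" where "miJ \<equiv> (- \<i>) \<cdot>\<^sub>m jj"

lemma iJ_carrier: "iJ \<in> carrier_mat 2 2" "miJ \<in> carrier_mat 2 2" by auto
lemma z2_carrier: "z2 \<in> carrier_mat 2 2" by auto

lemma N_equiv: assumes cm: "is_CM 3 \<gamma>" and ppt: "PPT \<gamma>" and R: "R \<in> carrier_mat 2 2"
  shows "loewner_ge (Nmat \<gamma>) R \<longleftrightarrow> psd (cmat \<gamma> - dsum R (dsum iJ iJ))"
    "loewner_ge (Ntmat \<gamma>) R \<longleftrightarrow> psd (cmat \<gamma> - dsum R (dsum iJ miJ))"
proof -
  have g: "\<gamma> \<in> carrier_mat 6 6" and sym: "transpose_mat \<gamma> = \<gamma>" using cm unfolding is_CM_def by auto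
  note gf = gamma_four[OF g sym]
  define cA where "cA = cmat (blkA \<gamma>)"
  define cC where "cC = cmat (blkC \<gamma>)"
  define cB where "cB = cmat (blkB \<gamma>)"
  have A: "cA \<in> carrier_mat 2 2" and C: "cC \<in> carrier_mat 2 4" and B: "cB \<in> carrier_mat 4 4"
    unfolding cA_def cB_def cC_def using gf by auto
  have G4: "cmat \<gamma> = four_block_mat cA cC (mat_adjoint cC) cB" unfolding cA_def cB_def cC_def using gf(4) .
  have Ca: "mat_adjoint cC \<in> carrier_mat 4 2" using C by simp
  have Jp: "dsum iJ iJ \<in> carrier_mat 4 4" and Jm: "dsum iJ miJ \<in> carrier_mat 4 4"
    using iJ_carrier dsum_carrier[of iJ 2 iJ 2] dsum_carrier[of iJ 2 miJ 2] by auto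
  have sub: "cmat \<gamma> - dsum R' T = four_block_mat (cA - R') cC (mat_adjoint cC) (cB - T)"
    if "R' \<in> carrier_mat 2 2" "T \<in> carrier_mat 4 4" for R' T
    unfolding G4 by (rule four_minus_dsum[OF A C Ca B that])
  have c3: "psd (cmat \<gamma> - \<i> \<cdot>\<^sub>m Jmodes 3 {})" using cm unfolding is_CM_def loewner_ge_def by simp
  have c3': "psd (cmat \<gamma> - \<i> \<cdot>\<^sub>m Jmodes 3 {2})" using ppt unfolding PPT_def loewner_ge_def by simp
  have PJp: "psd (four_block_mat (cA - iJ) cC (mat_adjoint cC) (cB - dsum iJ iJ))"
    using c3 unfolding J3_0 sub[OF iJ_carrier(1) Jp] .
  have PJm: "psd (four_block_mat (cA - iJ) cC (mat_adjoint cC) (cB - dsum iJ miJ))"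
    using c3' unfolding J3_2 sub[OF iJ_carrier(1) Jm] .
  have YP: "cB - dsum iJ iJ \<in> carrier_mat 4 4" and YM: "cB - dsum iJ miJ \<in> carrier_mat 4 4"
    using Jp Jm by (auto intro: minus_carrier_mat)
  have adjC: "cmat (transpose_mat (blkC \<gamma>)) = mat_adjoint cC" unfolding cC_def adj_cmat ..
  have Neq: "Nmat \<gamma> = cA - cC * pinv (cB - dsum iJ iJ) * mat_adjoint cC"
    unfolding Nmat_def J2_0 adjC cA_def cB_def cC_def ..
  have Nteq: "Ntmat \<gamma> = cA - cC * pinv (cB - dsum iJ miJ) * mat_adjoint cC"
    unfolding Ntmat_def J2_1 adjC cA_def cB_def cC_def ..
  have pinvP: "pinv (cB - dsum iJ iJ) \<in> carrier_mat 4 4" and pinvM: "pinv (cB - dsum iJ miJ) \<in> carrier_mat 4 4"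
  proof -
    note D1 = psd_four_block_D[OF minus_carrier_mat[OF iJ_carrier(1)] C Ca YP PJp]
    note D2 = psd_four_block_D[OF minus_carrier_mat[OF iJ_carrier(1)] C Ca YM PJm]
    show "pinv (cB - dsum iJ iJ) \<in> carrier_mat 4 4" using pinv_props(1)[OF YP psdD(2)[OF D1(1)]] .
    show "pinv (cB - dsum iJ miJ) \<in> carrier_mat 4 4" using pinv_props(1)[OF YM psdD(2)[OF D2(1)]] .
  qed
  have dN: "dim_row (Nmat \<gamma>) = 2" "dim_col (Nmat \<gamma>) = 2" unfolding Neq using C Ca pinvP by auto
  have dNt: "dim_row (Ntmat \<gamma>) = 2" "dim_col (Ntmat \<gamma>) = 2" unfolding Nteq using C Ca pinvM by auto
  have "loewner_ge (Nmat \<gamma>) R \<longleftrightarrow> psd (Nmat \<gamma> - R)" unfolding loewner_ge_def using dN R by auto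
  also have "\<dots> \<longleftrightarrow> psd (four_block_mat (cA - R) cC (mat_adjoint cC) (cB - dsum iJ iJ))"
    unfolding Neq by (rule schur_equiv[OF A C YP R iJ_carrier(1) PJp])
  also have "\<dots> \<longleftrightarrow> psd (cmat \<gamma> - dsum R (dsum iJ iJ))" unfolding sub[OF R Jp] ..
  finally show "loewner_ge (Nmat \<gamma>) R \<longleftrightarrow> psd (cmat \<gamma> - dsum R (dsum iJ iJ))" .
  have "loewner_ge (Ntmat \<gamma>) R \<longleftrightarrow> psd (Ntmat \<gamma> - R)" unfolding loewner_ge_def using dNt R by auto
  also have "\<dots> \<longleftrightarrow> psd (four_block_mat (cA - R) cC (mat_adjoint cC) (cB - dsum iJ miJ))"
    unfolding Nteq by (rule schur_equiv[OF A C YM R iJ_carrier(1) PJm])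
  also have "\<dots> \<longleftrightarrow> psd (cmat \<gamma> - dsum R (dsum iJ miJ))" unfolding sub[OF R Jm] ..
  finally show "loewner_ge (Ntmat \<gamma>) R \<longleftrightarrow> psd (cmat \<gamma> - dsum R (dsum iJ miJ))" .
qed

lemma sep_fwd: assumes cm: "is_CM 3 \<gamma>" and fs: "fully_separable \<gamma>"
  shows "\<exists>\<gamma>A. is_CM 1 \<gamma>A \<and> det \<gamma>A = 1 \<and> psd (cmat \<gamma> - dsum (cmat \<gamma>A) (dsum iJ iJ))
            \<and> psd (cmat \<gamma> - dsum (cmat \<gamma>A) (dsum iJ miJ))"
proof -
  have g: "\<gamma> \<in> carrier_mat 6 6" using cm unfolding is_CM_def by auto
  have cg: "cmat \<gamma> \<in> carrier_mat 6 6" using g by simp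
  obtain gA gB gC where A: "is_CM 1 gA" and B: "is_CM 1 gB" and C: "is_CM 1 gC"
    and P: "loewner_ge (cmat \<gamma>) (cmat (dsum gA (dsum gB gC)))"
    using fs unfolding fully_separable_def by blast
  have P': "psd (cmat \<gamma> - dsum (cmat gA) (dsum (cmat gB) (cmat gC)))"
    using P unfolding loewner_ge_def cmat_dsum by simp
  note pA = cm_props[OF A] and pB = cm_props[OF B] and pC = cm_props[OF C]
  obtain gA' where A': "is_CM 1 gA'" and dA': "det gA' = 1" and pAA': "psd (cmat gA - cmat gA')"
    using cm_extract[OF pA(2) pA(5) pA(3) pA(4)] by blast
  note pA' = cm_props[OF A']
  have main: "psd (cmat \<gamma> - dsum (cmat gA') (dsum iJ s))" if s: "s \<in> carrier_mat 2 2" and ps: "psd (cmat gC - s)" for s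
  proof -
    have eq: "cmat \<gamma> - dsum (cmat gA') (dsum iJ s) = (cmat \<gamma> - dsum (cmat gA) (dsum (cmat gB) (cmat gC)))
       + dsum (cmat gA - cmat gA') (dsum (cmat gB - iJ) (cmat gC - s))"
      by (rule d3_lin[OF cg pA(2) pB(2) pC(2) pA'(2) iJ_carrier(1) s])
    have c1: "cmat gA - cmat gA' \<in> carrier_mat 2 2" and c2: "cmat gB - iJ \<in> carrier_mat 2 2"
      and c3: "cmat gC - s \<in> carrier_mat 2 2" using pA'(2) iJ_carrier s by (auto intro: minus_carrier_mat)
    have pd: "psd (dsum (cmat gA - cmat gA') (dsum (cmat gB - iJ) (cmat gC - s)))"
      by (rule psd_d3[OF pAA' pB(3) ps c1 c2 c3])
    have "dsum (cmat gA - cmat gA') (dsum (cmat gB - iJ) (cmat gC - s)) \<in> carrier_mat 6 6"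
      using dsum_carrier[OF c2 c3] dsum_carrier[OF c1, of _ 4] by simp
    moreover have "dsum (cmat gA) (dsum (cmat gB) (cmat gC)) \<in> carrier_mat 6 6"
      using dsum_carrier[OF pB(2) pC(2)] dsum_carrier[OF pA(2), of _ 4] by simp
    then have "cmat \<gamma> - dsum (cmat gA) (dsum (cmat gB) (cmat gC)) \<in> carrier_mat 6 6"
      by (rule minus_carrier_mat)
    ultimately show ?thesis unfolding eq using psd_add[OF P' pd] by blast
  qed
  show ?thesis using A' dA' main[OF iJ_carrier(1) pC(3)] main[OF iJ_carrier(2) pC(4)] by blast
qed

lemma d3_carrier: "a \<in> carrier_mat 2 2 \<Longrightarrow> b \<in> carrier_mat 2 2 \<Longrightarrow> c \<in> carrier_mat 2 2 \<Longrightarrow> dsum a (dsum b c) \<in> carrier_mat 6 6"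
  using dsum_carrier[of b 2 c 2] dsum_carrier[of a 2 "dsum b c" 4] by simp

lemma rot_step: assumes X: "(X::complex mat) \<in> carrier_mat 6 6" and a: "a \<in> carrier_mat 2 2"
  and b: "b \<in> carrier_mat 2 2" and c: "c \<in> carrier_mat 2 2" and P: "psd (X - dsum a (dsum b c))"
  shows "psd (rot X - dsum b (dsum c a))"
proof -
  have d: "dsum a (dsum b c) \<in> carrier_mat 6 6" by (rule d3_carrier[OF a b c])
  have Xd: "X - dsum a (dsum b c) \<in> carrier_mat 6 6" by (rule minus_carrier_mat[OF d])
  have "psd (rot (X - dsum a (dsum b c)))" by (rule psd_rot[OF P Xd])
  moreover have "rot (X - dsum a (dsum b c)) = rot X - dsum b (dsum c a)"
    unfolding rot_minus[OF X d] rot_d3[OF a b c] ..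
  ultimately show ?thesis by simp
qed

lemma conj_step: assumes X: "(X::complex mat) \<in> carrier_mat 6 6" and a: "a \<in> carrier_mat 2 2"
  and b: "b \<in> carrier_mat 2 2" and c: "c \<in> carrier_mat 2 2" and P: "psd (X - dsum a (dsum b c))"
  and r: "map_mat cnj X = X"
  shows "psd (X - dsum (map_mat cnj a) (dsum (map_mat cnj b) (map_mat cnj c)))"
  using psd_conj[OF P] unfolding conj_d3[OF X a b c] r .

lemma sep_bwd: assumes cm: "is_CM 3 \<gamma>" and A: "is_CM 1 gA"
  and Pp: "psd (cmat \<gamma> - dsum (cmat gA) (dsum iJ iJ))" and Pm: "psd (cmat \<gamma> - dsum (cmat gA) (dsum iJ miJ))"
  shows "fully_separable \<gamma>"
proof -
  have g: "\<gamma> \<in> carrier_mat 6 6" using cm unfolding is_CM_def by auto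
  have cg: "cmat \<gamma> \<in> carrier_mat 6 6" using g by simp
  note pA = cm_props[OF A]
  have z: "z2 \<in> carrier_mat 2 2" by (rule z2_carrier)
  note iJc = iJ_carrier(1) and miJc = iJ_carrier(2)
  define W0 where "W0 = cmat \<gamma> - dsum (cmat gA) (dsum z2 z2)"
  have W0c: "W0 \<in> carrier_mat 6 6" unfolding W0_def by (rule minus_carrier_mat[OF d3_carrier[OF pA(2) z z]])
  have W0r: "map_mat cnj W0 = W0" unfolding W0_def conj_d3[OF cg pA(2) z z] conj_cmat conj_z ..
  have H1: "psd (W0 - dsum z2 (dsum iJ iJ))" using Pp unfolding d3_split[OF cg pA(2) iJc iJc] W0_def .
  have H2': "psd (W0 - dsum z2 (dsum iJ miJ))" using Pm unfolding d3_split[OF cg pA(2) iJc miJc] W0_def .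
  have H2: "psd (W0 - dsum z2 (dsum miJ iJ))" using conj_step[OF W0c z iJc miJc H2' W0r] unfolding conj_z conj_iJ .
  define W1 where "W1 = rot W0"
  have W1c: "W1 \<in> carrier_mat 6 6" unfolding W1_def by simp
  have W1r: "map_mat cnj W1 = W1" unfolding W1_def conj_rot[OF W0c] W0r ..
  have R1: "psd (W1 - dsum iJ (dsum iJ z2))" unfolding W1_def by (rule rot_step[OF W0c z iJc iJc H1])
  have R2: "psd (W1 - dsum miJ (dsum iJ z2))" unfolding W1_def by (rule rot_step[OF W0c z miJc iJc H2])
  have Q1: "dsum iJ z2 \<in> carrier_mat 4 4" using dsum_carrier[OF iJc z] by simp
  have W1c': "W1 \<in> carrier_mat (2 + 4) (2 + 4)" using W1c by simp
  obtain gB where B: "is_CM 1 gB" and PB: "psd (W1 - dsum (cmat gB) (dsum iJ z2))"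
    using decouple[OF W1c' Q1 R1 R2] by blast
  note pB = cm_props[OF B]
  have PB': "psd (W1 - dsum (cmat gB) (dsum miJ z2))"
    using conj_step[OF W1c pB(2) iJc z PB W1r] unfolding conj_z conj_iJ conj_cmat .
  define W2 where "W2 = rot W1"
  have W2c: "W2 \<in> carrier_mat 6 6" unfolding W2_def by simp
  have S1: "psd (W2 - dsum iJ (dsum z2 (cmat gB)))" unfolding W2_def by (rule rot_step[OF W1c pB(2) iJc z PB])
  have S2: "psd (W2 - dsum miJ (dsum z2 (cmat gB)))" unfolding W2_def by (rule rot_step[OF W1c pB(2) miJc z PB'])
  have Q2: "dsum z2 (cmat gB) \<in> carrier_mat 4 4" using dsum_carrier[OF z pB(2)] by simp
  have W2c': "W2 \<in> carrier_mat (2 + 4) (2 + 4)" using W2c by simp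
  obtain gC where C: "is_CM 1 gC" and PC: "psd (W2 - dsum (cmat gC) (dsum z2 (cmat gB)))"
    using decouple[OF W2c' Q2 S1 S2] by blast
  note pC = cm_props[OF C]
  have "psd (rot W2 - dsum z2 (dsum (cmat gB) (cmat gC)))" by (rule rot_step[OF W2c pC(2) z pB(2) PC])
  moreover have "rot W2 = W0" unfolding W2_def W1_def by (rule rot3[OF W0c])
  ultimately have "psd (W0 - dsum z2 (dsum (cmat gB) (cmat gC)))" by simp
  then have fin: "psd (cmat \<gamma> - cmat (dsum gA (dsum gB gC)))"
    unfolding cmat_dsum d3_split[OF cg pA(2) pB(2) pC(2)] W0_def .
  have dd: "dsum gA (dsum gB gC) \<in> carrier_mat 6 6" using d3_carrier[OF pA(1) pB(1) pC(1)] .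
  have "loewner_ge (cmat \<gamma>) (cmat (dsum gA (dsum gB gC)))" unfolding loewner_ge_def using fin g pA(1) pB(1) pC(1) by auto
  then show ?thesis unfolding fully_separable_def using A B C by blast
qed

theorem lemma4:
  fixes \<gamma> :: "real mat"
  assumes "is_CM 3 \<gamma>" and "PPT \<gamma>"
  shows "(fully_separable \<gamma> \<longleftrightarrow>
            (\<exists>\<gamma>A. is_CM 1 \<gamma>A \<and> loewner_ge (Ntmat \<gamma>) (cmat \<gamma>A) \<and> loewner_ge (Nmat \<gamma>) (cmat \<gamma>A)))
       \<and> (fully_separable \<gamma> \<longleftrightarrow>
            (\<exists>\<gamma>A. is_CM 1 \<gamma>A \<and> det \<gamma>A = 1 \<and>
                  loewner_ge (Ntmat \<gamma>) (cmat \<gamma>A) \<and> loewner_ge (Nmat \<gamma>) (cmat \<gamma>A)))"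
proof -
  have E: "loewner_ge (Ntmat \<gamma>) (cmat gA) \<and> loewner_ge (Nmat \<gamma>) (cmat gA) \<longleftrightarrow>
      psd (cmat \<gamma> - dsum (cmat gA) (dsum iJ iJ)) \<and> psd (cmat \<gamma> - dsum (cmat gA) (dsum iJ miJ))"
    if A: "is_CM 1 gA" for gA
    using N_equiv[OF assms cm_props(2)[OF A]] by blast
  have fwd: "\<exists>\<gamma>A. is_CM 1 \<gamma>A \<and> det \<gamma>A = 1 \<and> loewner_ge (Ntmat \<gamma>) (cmat \<gamma>A) \<and> loewner_ge (Nmat \<gamma>) (cmat \<gamma>A)"
    if fs: "fully_separable \<gamma>"
  proof -
    obtain gA where A: "is_CM 1 gA" and d: "det gA = 1" and P: "psd (cmat \<gamma> - dsum (cmat gA) (dsum iJ iJ))"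
      "psd (cmat \<gamma> - dsum (cmat gA) (dsum iJ miJ))"
      using sep_fwd[OF assms(1) fs] by blast
    show ?thesis using A d P E[OF A] by blast
  qed
  have bwd: "fully_separable \<gamma>" if A: "is_CM 1 gA" and N: "loewner_ge (Ntmat \<gamma>) (cmat gA)" "loewner_ge (Nmat \<gamma>) (cmat gA)" for gA
  proof -
    have "psd (cmat \<gamma> - dsum (cmat gA) (dsum iJ iJ))" "psd (cmat \<gamma> - dsum (cmat gA) (dsum iJ miJ))"
      using E[OF A] N by blast+
    then show ?thesis using sep_bwd[OF assms(1) A] by blast
  qed
  show ?thesis using fwd bwd by blast
qed

end
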